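(* Fix $n\in\mathbb{N}$. For each $N \ge n$ let $(\nu_t^{(1:N)})_{t\ge1}$ be random vectors of non-negative integers with $\sum_i\nu_t^{(i)} = N$, such that for all sufficiently large $N$ and all $u\ge0$, $\tau_N(u)<\infty$ almost surely. Suppose there is a deterministic sequence $b_N\to0$ such that for all sufficiently large $N$, almost surely and uniformly in $t\ge1$, $$\frac{1}{(N)_3}\sum_{i=1}^N \mathbb{E}\big[(\nu_t^{(i)})_3 \,\big|\, \mathcal{F}_{t-1}\big] \leq b_N \frac{1}{(N)_2}\sum_{i=1}^N \mathbb{E}\big[(\nu_t^{(i)})_2 \,\big|\, \mathcal{F}_{t-1}\big].$$ Then for any $0 < t < \infty$, $$\lim_{N\to\infty}\mathbb{E}\Bigg[\prod_{r=1}^{\tau_N(t)}(1-p_r)\Bigg] = e^{-\alpha_n t}, \qquad \alpha_n := n(n-1)/2.$$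
   Context: $(x)_k$ is the falling factorial; $\mathcal{F}_t := \sigma(\nu_s^{(1:N)}: s\le t)$ ($\mathcal{F}_0$ trivial). $c_N(r) := \frac{1}{(N)_2}\sum_i(\nu_r^{(i)})_2$; $\tau_N(u) := \inf\{s\in\{0,1,\dots\}: \sum_{r=1}^s c_N(r)\ge u\}$. $p_r := 1 - \frac{1}{(N)_n}\sum_{i_1,\dots,i_n\text{ distinct}}\nu_r^{(i_1)}\cdots\nu_r^{(i_n)}$ (one minus the conditional probability, given $\nu_r^{(1:N)}$, that $n$ distinct lineages have distinct parents in one generation). *)

theory Defs
  imports "HOL-Probability.Probability" "HOL-Library.FuncSet"
begin

definition ffac :: "nat \<Rightarrow> real \<Rightarrow> real" where
  "ffac k x = (\<Prod>j<k. (x - real j))"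

text \<open>Natural filtration F_t generated by nu_s^(i), s \<le> t (s \<ge> 1), i < N
  (indices i are 0-based: 0..N-1). F_0 is the trivial sigma algebra.\<close>
definition filt :: "'a measure \<Rightarrow> nat \<Rightarrow> (nat \<Rightarrow> nat \<Rightarrow> 'a \<Rightarrow> nat) \<Rightarrow> nat \<Rightarrow> 'a measure" where
  "filt M N nu t = sigma (space M)
     {nu s i -` A \<inter> space M | s i A. 1 \<le> s \<and> s \<le> t \<and> i < N}"

definition cN :: "nat \<Rightarrow> (nat \<Rightarrow> nat \<Rightarrow> 'a \<Rightarrow> nat) \<Rightarrow> nat \<Rightarrow> 'a \<Rightarrow> real" where
  "cN N nu r \<omega> = (\<Sum>i<N. ffac 2 (real (nu r i \<omega>))) / ffac 2 (real N)"

text \<open>tau_N(u) = inf{s \<ge> 0 : sum_{r=1}^s c_N(r) \<ge> u}; infinite case represented by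
  an unspecified natural number (only matters on a null set).\<close>
definition tauN :: "nat \<Rightarrow> (nat \<Rightarrow> nat \<Rightarrow> 'a \<Rightarrow> nat) \<Rightarrow> real \<Rightarrow> 'a \<Rightarrow> nat" where
  "tauN N nu u \<omega> = (LEAST s. (\<Sum>r\<in>{1..s}. cN N nu r \<omega>) \<ge> u)"

text \<open>p_r = 1 - (1/(N)_n) sum over distinct i_1..i_n of nu_r^(i_1)...nu_r^(i_n);
  tuples of distinct indices are the injective maps {..<n} \<rightarrow> {..<N}.\<close>
definition pr :: "nat \<Rightarrow> nat \<Rightarrow> (nat \<Rightarrow> nat \<Rightarrow> 'a \<Rightarrow> nat) \<Rightarrow> nat \<Rightarrow> 'a \<Rightarrow> real" where
  "pr n N nu r \<omega> = 1 - (\<Sum>f\<in>{f \<in> {..<n} \<rightarrow>\<^sub>E {..<N}. inj_on f {..<n}}.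
        (\<Prod>j<n. real (nu r (f j) \<omega>))) / ffac n (real N)"

end

theory Submission
  imports Defs
begin


lemma ffac_Suc: "ffac (Suc k) x = ffac k x * (x - real k)"
  by (simp add: ffac_def)
lemma ffac_0[simp]: "ffac 0 x = 1" by (simp add: ffac_def)
lemma ffac2: "ffac 2 x = x * (x - 1)"
  by (simp add: ffac_def numeral_2_eq_2)
lemma ffac3: "ffac 3 x = x * (x - 1) * (x - 2)"
  by (simp add: ffac_def numeral_3_eq_3)

lemma ffac_nat_nonneg: "0 \<le> ffac k (real (m::nat))"
proof (induction k)
  case 0 then show ?case by simp
next
  case (Suc k)
  show ?case
  proof (cases "k \<le> m")
    case True then show ?thesis using Suc by (simp add: ffac_Suc)
  next
    case False
    then have "ffac k (real m) = 0" unfolding ffac_def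
      by (intro prod_zero) (auto intro!: bexI[of _ m])
    then show ?thesis by (simp add: ffac_Suc)
  qed
qed

lemma ffac_pos: "k \<le> N \<Longrightarrow> 0 < ffac k (real N)"
  unfolding ffac_def by (intro prod_pos) auto

lemma ffac_le_pow: "k \<le> N \<Longrightarrow> ffac k (real N) \<le> real N ^ k"
  unfolding ffac_def
  using prod_mono[of "{..<k}" "\<lambda>j. real N - real j" "\<lambda>_. real N"] by auto

lemma ffac_ge_pow: "k \<le> n \<Longrightarrow> n \<le> N \<Longrightarrow> (real N - real n) ^ k \<le> ffac k (real N)"
  unfolding ffac_def
  using prod_mono[of "{..<k}" "\<lambda>_. real N - real n" "\<lambda>j. real N - real j"] by auto

definition Inj :: "nat \<Rightarrow> nat \<Rightarrow> (nat \<Rightarrow> nat) set" where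
  "Inj N m = {f \<in> {..<m} \<rightarrow>\<^sub>E {..<N}. inj_on f {..<m}}"

lemma finite_Inj: "finite (Inj N m)"
  unfolding Inj_def by (rule finite_subset[OF _ finite_PiE[of "{..<m}" "\<lambda>_. {..<N}"]]) auto

lemma Inj_Suc: "Inj N (Suc m) = (\<lambda>(g, y). g(m := y)) ` (SIGMA g:Inj N m. {..<N} - g ` {..<m})"
proof (intro equalityI subsetI)
  fix f assume f: "f \<in> Inj N (Suc m)"
  define g where "g = f(m := undefined)"
  have fm: "f \<in> insert m {..<m} \<rightarrow>\<^sub>E {..<N}" "inj_on f (insert m {..<m})"
    using f by (auto simp: Inj_def lessThan_Suc)
  have "g \<in> {..<m} \<rightarrow>\<^sub>E {..<N}" unfolding g_def by (rule fun_upd_in_PiE[OF _ fm(1)]) auto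
  moreover have "inj_on g {..<m}" using fm(2) unfolding g_def inj_on_def by auto
  moreover have "f m \<in> {..<N} - g ` {..<m}" using fm unfolding g_def inj_on_def by auto
  moreover have "f = g(m := f m)" unfolding g_def by auto
  ultimately show "f \<in> (\<lambda>(g, y). g(m := y)) ` (SIGMA g:Inj N m. {..<N} - g ` {..<m})"
    unfolding Inj_def by (intro image_eqI[of _ _ "(g, f m)"]) auto
next
  fix f assume "f \<in> (\<lambda>(g, y). g(m := y)) ` (SIGMA g:Inj N m. {..<N} - g ` {..<m})"
  then obtain g y where g: "g \<in> Inj N m" and y: "y \<in> {..<N} - g ` {..<m}" and f: "f = g(m := y)"
    by auto
  have "f \<in> insert m {..<m} \<rightarrow>\<^sub>E {..<N}" unfolding f using g y
    by (intro PiE_fun_upd) (auto simp: Inj_def)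
  moreover have "inj_on f (insert m {..<m})" using g y unfolding f Inj_def inj_on_def
    by auto
  ultimately show "f \<in> Inj N (Suc m)" by (simp add: Inj_def lessThan_Suc)
qed

lemma Inj_Suc_sum:
  "(\<Sum>f\<in>Inj N (Suc m). h f) = (\<Sum>g\<in>Inj N m. \<Sum>y\<in>{..<N} - g ` {..<m}. h (g(m := y)))"
proof -
  have inj: "inj_on (\<lambda>(g, y). g(m := y)) (SIGMA g:Inj N m. {..<N} - g ` {..<m})"
  proof (rule inj_onI, clarsimp)
    fix g y g' y' assume g: "g \<in> Inj N m" "g' \<in> Inj N m" and eq: "g(m := y) = g'(m := y')"
    have "y = y'" using fun_cong[OF eq, of m] by simp
    moreover have "g = g'"
    proof
      fix x show "g x = g' x"
      proof (cases "x < m")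
        case True then show ?thesis using fun_cong[OF eq, of x] by simp
      next
        case False then show ?thesis using g by (auto simp: Inj_def PiE_def extensional_def)
      qed
    qed
    ultimately show "g = g' \<and> y = y'" by simp
  qed
  have "(\<Sum>f\<in>Inj N (Suc m). h f) = (\<Sum>p\<in>(SIGMA g:Inj N m. {..<N} - g ` {..<m}). h ((\<lambda>(g, y). g(m := y)) p))"
    unfolding Inj_Suc by (rule sum.reindex[OF inj, unfolded comp_def])
  also have "\<dots> = (\<Sum>g\<in>Inj N m. \<Sum>y\<in>{..<N} - g ` {..<m}. h (g(m := y)))"
    by (subst sum.Sigma) (auto simp: finite_Inj split_beta)
  finally show ?thesis .
qed

lemma Inj_0: "Inj N 0 = {\<lambda>_. undefined}"
  unfolding Inj_def by auto

lemma sum_compl_img: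
  assumes "g \<in> Inj N m"
  shows "(\<Sum>y\<in>{..<N} - g ` {..<m}. (h y :: real)) = (\<Sum>y<N. h y) - (\<Sum>j<m. h (g j))"
proof -
  have sub: "g ` {..<m} \<subseteq> {..<N}" and inj: "inj_on g {..<m}" using assms by (auto simp: Inj_def)
  have "(\<Sum>y\<in>{..<N} - g ` {..<m}. h y) = (\<Sum>y<N. h y) - (\<Sum>y\<in>g ` {..<m}. h y)"
    by (rule sum_diff[OF _ sub]) simp
  also have "(\<Sum>y\<in>g ` {..<m}. h y) = (\<Sum>j<m. h (g j))"
    by (rule sum.reindex[OF inj, unfolded comp_def])
  finally show ?thesis .
qed

definition P :: "(nat \<Rightarrow> nat) \<Rightarrow> nat \<Rightarrow> (nat \<Rightarrow> nat) \<Rightarrow> real" where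
  "P v m g = (\<Prod>j<m. real (v (g j)))"
definition Yf :: "(nat \<Rightarrow> nat) \<Rightarrow> nat \<Rightarrow> (nat \<Rightarrow> nat) \<Rightarrow> real" where
  "Yf v m g = (\<Sum>j<m. real (v (g j)) - 1)"
definition S2 :: "(nat \<Rightarrow> nat) \<Rightarrow> nat \<Rightarrow> (nat \<Rightarrow> nat) \<Rightarrow> real" where
  "S2 v m g = (\<Sum>j<m. ffac 2 (real (v (g j))))"
definition W :: "(nat \<Rightarrow> nat) \<Rightarrow> nat \<Rightarrow> nat \<Rightarrow> real" where
  "W v N m = (\<Sum>g\<in>Inj N m. P v m g)"
definition Z :: "(nat \<Rightarrow> nat) \<Rightarrow> nat \<Rightarrow> nat \<Rightarrow> real" where
  "Z v N m = (\<Sum>g\<in>Inj N m. P v m g * Yf v m g)"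
definition U :: "(nat \<Rightarrow> nat) \<Rightarrow> nat \<Rightarrow> nat \<Rightarrow> real" where
  "U v N m = (\<Sum>g\<in>Inj N m. P v m g * S2 v m g)"
definition Qs :: "(nat \<Rightarrow> nat) \<Rightarrow> nat \<Rightarrow> real" where
  "Qs v N = (\<Sum>i<N. ffac 2 (real (v i)))"
definition Ts :: "(nat \<Rightarrow> nat) \<Rightarrow> nat \<Rightarrow> real" where
  "Ts v N = (\<Sum>i<N. ffac 3 (real (v i)))"

lemma upd_sum: "(\<Sum>j<Suc m. h ((g(m := y)) j)) = (\<Sum>j<m. h (g j)) + (h y :: real)"
  by (simp add: sum.lessThan_Suc)
lemma upd_prod: "(\<Prod>j<Suc m. h ((g(m := y)) j)) = (\<Prod>j<m. h (g j)) * (h y :: real)"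
  by (simp add: prod.lessThan_Suc)

lemma P_upd: "P v (Suc m) (g(m := y)) = P v m g * real (v y)"
  unfolding P_def by (rule upd_prod)
lemma Yf_upd: "Yf v (Suc m) (g(m := y)) = Yf v m g + (real (v y) - 1)"
  unfolding Yf_def by (rule upd_sum)
lemma S2_upd: "S2 v (Suc m) (g(m := y)) = S2 v m g + ffac 2 (real (v y))"
  unfolding S2_def by (rule upd_sum)

lemma P_nonneg: "0 \<le> P v m g"
  unfolding P_def by (intro prod_nonneg) auto

lemma P_factor_nonneg: assumes "j < m" shows "0 \<le> P v m g * (real (v (g j)) - 1)"
proof (cases "v (g j) = 0")
  case True
  then have "P v m g = 0" unfolding P_def using assms by (intro prod_zero) auto
  then show ?thesis by simp
next
  case False then show ?thesis using P_nonneg[of v m g] by simp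
qed

lemma PY_nonneg: "0 \<le> P v m g * Yf v m g"
  unfolding Yf_def sum_distrib_left by (intro sum_nonneg P_factor_nonneg) auto

lemma S2_nonneg: "0 \<le> S2 v m g"
  unfolding S2_def by (intro sum_nonneg ffac_nat_nonneg)

lemma PS2_nonneg: "0 \<le> P v m g * S2 v m g"
  using P_nonneg S2_nonneg by (rule mult_nonneg_nonneg)

lemma P_sq_factor: assumes "j < m"
  shows "P v m g * (real (v (g j)) - 1)^2 \<le> P v m g * ffac 2 (real (v (g j)))"
proof (cases "v (g j) = 0")
  case True
  then have "P v m g = 0" unfolding P_def using assms by (intro prod_zero) auto
  then show ?thesis by simp
next
  case False
  then have h: "1 \<le> real (v (g j))" by simp
  have "(real (v (g j)) - 1)^2 \<le> ffac 2 (real (v (g j)))"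
    using h by (simp add: ffac2 power2_eq_square algebra_simps)
  then show ?thesis using P_nonneg[of v m g] by (rule mult_left_mono)
qed

lemma PY2_le: "P v m g * (Yf v m g)^2 \<le> real m * (P v m g * S2 v m g)"
proof -
  have "(Yf v m g)^2 \<le> (\<Sum>j<m. (real (v (g j)) - 1)^2) * real m"
    unfolding Yf_def using sum_squared_le_sum_of_squares[of "\<lambda>j. real (v (g j)) - 1" "{..<m}"] by simp
  then have "P v m g * (Yf v m g)^2 \<le> P v m g * ((\<Sum>j<m. (real (v (g j)) - 1)^2) * real m)"
    using P_nonneg by (rule mult_left_mono)
  also have "\<dots> = real m * (\<Sum>j<m. P v m g * (real (v (g j)) - 1)^2)"
    by (simp add: sum_distrib_left sum_distrib_right mult_ac)
  also have "\<dots> \<le> real m * (\<Sum>j<m. P v m g * ffac 2 (real (v (g j))))"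
    by (intro mult_left_mono sum_mono P_sq_factor) auto
  also have "\<dots> = real m * (P v m g * S2 v m g)"
    by (simp add: S2_def sum_distrib_left)
  finally show ?thesis .
qed

lemma sumv_Yf: "(\<Sum>j<m. real (v (g j))) = Yf v m g + real m"
  unfolding Yf_def by (simp add: sum_subtractf)

lemma W_0: "W v N 0 = 1" by (simp add: W_def Inj_0 P_def)
lemma Z_0: "Z v N 0 = 0" by (simp add: Z_def Inj_0 Yf_def)
lemma U_0: "U v N 0 = 0" by (simp add: U_def Inj_0 S2_def)

lemma W_nonneg: "0 \<le> W v N m" unfolding W_def by (intro sum_nonneg P_nonneg)
lemma Z_nonneg: "0 \<le> Z v N m" unfolding Z_def by (intro sum_nonneg PY_nonneg)
lemma U_nonneg: "0 \<le> U v N m" unfolding U_def by (intro sum_nonneg PS2_nonneg)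
lemma Qs_nonneg: "0 \<le> Qs v N" unfolding Qs_def by (intro sum_nonneg ffac_nat_nonneg)
lemma Ts_nonneg: "0 \<le> Ts v N" unfolding Ts_def by (intro sum_nonneg ffac_nat_nonneg)

context
  fixes v :: "nat \<Rightarrow> nat" and N :: nat
  assumes tot: "(\<Sum>i<N. v i) = N"
begin

lemma totr: "(\<Sum>i<N. real (v i)) = real N"
  using tot by (metis of_nat_sum)

lemma W_rec: "W v N (Suc m) = (real N - real m) * W v N m - Z v N m"
proof -
  have "W v N (Suc m) = (\<Sum>g\<in>Inj N m. \<Sum>y\<in>{..<N} - g ` {..<m}. P v m g * real (v y))"
    unfolding W_def Inj_Suc_sum P_upd ..
  also have "\<dots> = (\<Sum>g\<in>Inj N m. (real N - real m) * P v m g - P v m g * Yf v m g)"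
  proof (rule sum.cong[OF refl])
    fix g assume g: "g \<in> Inj N m"
    have "(\<Sum>y\<in>{..<N} - g ` {..<m}. P v m g * real (v y))
       = P v m g * (\<Sum>y\<in>{..<N} - g ` {..<m}. real (v y))" by (simp add: sum_distrib_left)
    also have "\<dots> = P v m g * (real N - (Yf v m g + real m))"
      by (simp add: sum_compl_img[OF g] totr sumv_Yf)
    finally show "(\<Sum>y\<in>{..<N} - g ` {..<m}. P v m g * real (v y)) =
         (real N - real m) * P v m g - P v m g * Yf v m g" by (simp add: algebra_simps)
  qed
  also have "\<dots> = (real N - real m) * W v N m - Z v N m"
    by (simp add: W_def Z_def sum_subtractf sum_distrib_left)
  finally show ?thesis .
qed

lemma Z_rec: "Z v N (Suc m) = (real N - real m) * Z v N m
    - (\<Sum>g\<in>Inj N m. P v m g * (Yf v m g)^2) + Qs v N * W v N m - U v N m"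
proof -
  have "Z v N (Suc m) = (\<Sum>g\<in>Inj N m. \<Sum>y\<in>{..<N} - g ` {..<m}.
           P v m g * real (v y) * (Yf v m g + (real (v y) - 1)))"
    unfolding Z_def Inj_Suc_sum P_upd Yf_upd ..
  also have "\<dots> = (\<Sum>g\<in>Inj N m. (real N - real m) * (P v m g * Yf v m g)
       - P v m g * (Yf v m g)^2 + Qs v N * P v m g - P v m g * S2 v m g)"
  proof (rule sum.cong[OF refl])
    fix g assume g: "g \<in> Inj N m"
    have "(\<Sum>y\<in>{..<N} - g ` {..<m}. P v m g * real (v y) * (Yf v m g + (real (v y) - 1)))
       = (\<Sum>y\<in>{..<N} - g ` {..<m}. P v m g * Yf v m g * real (v y) + P v m g * ffac 2 (real (v y)))"
      by (rule sum.cong) (simp_all add: ffac2 algebra_simps)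
    also have "\<dots> = P v m g * Yf v m g * (\<Sum>y\<in>{..<N} - g ` {..<m}. real (v y))
         + P v m g * (\<Sum>y\<in>{..<N} - g ` {..<m}. ffac 2 (real (v y)))"
      by (simp add: sum_distrib_left sum.distrib)
    also have "\<dots> = P v m g * Yf v m g * (real N - (Yf v m g + real m))
         + P v m g * (Qs v N - S2 v m g)"
      by (simp add: sum_compl_img[OF g] totr sumv_Yf Qs_def S2_def)
    finally show "(\<Sum>y\<in>{..<N} - g ` {..<m}. P v m g * real (v y) * (Yf v m g + (real (v y) - 1))) =
      (real N - real m) * (P v m g * Yf v m g) - P v m g * (Yf v m g)^2 + Qs v N * P v m g - P v m g * S2 v m g"
      by (simp add: algebra_simps power2_eq_square)
  qed
  also have "\<dots> = (real N - real m) * Z v N m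
    - (\<Sum>g\<in>Inj N m. P v m g * (Yf v m g)^2) + Qs v N * W v N m - U v N m"
    by (simp add: W_def Z_def U_def sum_subtractf sum.distrib sum_distrib_left)
  finally show ?thesis .
qed

lemma U_rec_le: "U v N (Suc m) \<le> real N * U v N m + (Ts v N + 2 * Qs v N) * W v N m"
proof -
  have "U v N (Suc m) = (\<Sum>g\<in>Inj N m. \<Sum>y\<in>{..<N} - g ` {..<m}.
           P v m g * real (v y) * (S2 v m g + ffac 2 (real (v y))))"
    unfolding U_def Inj_Suc_sum P_upd S2_upd ..
  also have "\<dots> \<le> (\<Sum>g\<in>Inj N m. real N * (P v m g * S2 v m g) + (Ts v N + 2 * Qs v N) * P v m g)"
  proof (rule sum_mono)
    fix g assume g: "g \<in> Inj N m"
    have "(\<Sum>y\<in>{..<N} - g ` {..<m}. P v m g * real (v y) * (S2 v m g + ffac 2 (real (v y))))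
       = P v m g * S2 v m g * (\<Sum>y\<in>{..<N} - g ` {..<m}. real (v y))
         + P v m g * (\<Sum>y\<in>{..<N} - g ` {..<m}. real (v y) * ffac 2 (real (v y)))"
      by (simp add: sum_distrib_left sum.distrib algebra_simps)
    also have "\<dots> = P v m g * S2 v m g * (real N - (Yf v m g + real m))
         + P v m g * ((\<Sum>y<N. real (v y) * ffac 2 (real (v y))) - (\<Sum>j<m. real (v (g j)) * ffac 2 (real (v (g j)))))"
      by (simp add: sum_compl_img[OF g] totr sumv_Yf)
    also have "\<dots> \<le> P v m g * S2 v m g * real N + P v m g * (Ts v N + 2 * Qs v N)"
    proof (rule add_mono)
      have "0 \<le> P v m g * Yf v m g + real m * P v m g" using PY_nonneg[of v m g] P_nonneg[of v m g] by simp
      then have "0 \<le> (P v m g * Yf v m g + real m * P v m g) * S2 v m g"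
        using S2_nonneg[of v m g] by (rule mult_nonneg_nonneg)
      then show "P v m g * S2 v m g * (real N - (Yf v m g + real m)) \<le> P v m g * S2 v m g * real N"
        by (simp add: algebra_simps)
    next
      have e: "(\<Sum>y<N. real (v y) * ffac 2 (real (v y))) = Ts v N + 2 * Qs v N"
        unfolding Ts_def Qs_def sum_distrib_left sum.distrib[symmetric]
        by (rule sum.cong) (simp_all add: ffac2 ffac3 algebra_simps)
      have "0 \<le> (\<Sum>j<m. real (v (g j)) * ffac 2 (real (v (g j))))"
        by (intro sum_nonneg mult_nonneg_nonneg ffac_nat_nonneg) auto
      then show "P v m g * ((\<Sum>y<N. real (v y) * ffac 2 (real (v y))) - (\<Sum>j<m. real (v (g j)) * ffac 2 (real (v (g j)))))
          \<le> P v m g * (Ts v N + 2 * Qs v N)"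
        unfolding e using P_nonneg[of v m g] by (intro mult_left_mono) auto
    qed
    finally show "(\<Sum>y\<in>{..<N} - g ` {..<m}. P v m g * real (v y) * (S2 v m g + ffac 2 (real (v y))))
        \<le> real N * (P v m g * S2 v m g) + (Ts v N + 2 * Qs v N) * P v m g"
      by (simp add: algebra_simps)
  qed
  also have "\<dots> = real N * U v N m + (Ts v N + 2 * Qs v N) * W v N m"
    by (simp add: W_def U_def sum.distrib sum_distrib_left)
  finally show ?thesis .
qed


lemma W_le_F: "m \<le> N \<Longrightarrow> W v N m \<le> ffac m (real N)"
proof (induction m)
  case 0 then show ?case by (simp add: W_0)
next
  case (Suc m)
  then have "W v N m \<le> ffac m (real N)" by simp
  then have "(real N - real m) * W v N m \<le> (real N - real m) * ffac m (real N)"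
    using Suc.prems by (intro mult_left_mono) auto
  then show ?case using Z_nonneg[of v N m] by (simp add: W_rec ffac_Suc algebra_simps)
qed

lemma W_le_pow: "m \<le> N \<Longrightarrow> W v N m \<le> real N ^ m"
  using W_le_F ffac_le_pow order_trans by blast

lemma U_bound: "m \<le> N \<Longrightarrow> U v N m * real N \<le> real m * (Ts v N + 2 * Qs v N) * real N ^ m"
proof (induction m)
  case 0 then show ?case by (simp add: U_0)
next
  case (Suc m)
  let ?K = "Ts v N + 2 * Qs v N"
  have K: "0 \<le> ?K" using Ts_nonneg Qs_nonneg by (metis add_nonneg_nonneg mult_2 )
  have IH: "U v N m * real N \<le> real m * ?K * real N ^ m" using Suc by simp
  have "U v N (Suc m) * real N \<le> (real N * U v N m + ?K * W v N m) * real N"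
    by (intro mult_right_mono U_rec_le) auto
  also have "\<dots> = real N * (U v N m * real N) + ?K * W v N m * real N" by (simp add: algebra_simps)
  also have "\<dots> \<le> real N * (real m * ?K * real N ^ m) + ?K * real N ^ m * real N"
    using Suc.prems IH K by (intro add_mono mult_left_mono mult_right_mono W_le_pow) auto
  also have "\<dots> = real (Suc m) * ?K * real N ^ Suc m" by (simp add: algebra_simps)
  finally show ?case .
qed

lemma Z_upper_rec: "m \<le> N \<Longrightarrow> Z v N (Suc m) \<le> real N * Z v N m + Qs v N * W v N m"
proof -
  assume m: "m \<le> N"
  have "0 \<le> (\<Sum>g\<in>Inj N m. P v m g * (Yf v m g)^2)"
    by (intro sum_nonneg mult_nonneg_nonneg P_nonneg) auto
  moreover have "(real N - real m) * Z v N m \<le> real N * Z v N m"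
    using Z_nonneg[of v N m] by (intro mult_right_mono) auto
  ultimately show ?thesis using U_nonneg[of v N m] by (simp add: Z_rec)
qed

lemma Z_bound: "m \<le> N \<Longrightarrow> Z v N m * real N \<le> real m * Qs v N * real N ^ m"
proof (induction m)
  case 0 then show ?case by (simp add: Z_0)
next
  case (Suc m)
  have IH: "Z v N m * real N \<le> real m * Qs v N * real N ^ m" using Suc by simp
  have "Z v N (Suc m) * real N \<le> (real N * Z v N m + Qs v N * W v N m) * real N"
    using Suc.prems by (intro mult_right_mono Z_upper_rec) auto
  also have "\<dots> = real N * (Z v N m * real N) + Qs v N * W v N m * real N" by (simp add: algebra_simps)
  also have "\<dots> \<le> real N * (real m * Qs v N * real N ^ m) + Qs v N * real N ^ m * real N"
    using Suc.prems IH Qs_nonneg[of v N] by (intro add_mono mult_left_mono mult_right_mono W_le_pow) auto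
  also have "\<dots> = real (Suc m) * Qs v N * real N ^ Suc m" by (simp add: algebra_simps)
  finally show ?case .
qed

lemma Z_lower: "(real N - real m) * Z v N m + Qs v N * W v N m - (real m + 1) * U v N m \<le> Z v N (Suc m)"
proof -
  have "(\<Sum>g\<in>Inj N m. P v m g * (Yf v m g)^2) \<le> (\<Sum>g\<in>Inj N m. real m * (P v m g * S2 v m g))"
    by (intro sum_mono PY2_le)
  also have "\<dots> = real m * U v N m" by (simp add: U_def sum_distrib_left)
  finally show ?thesis by (simp add: Z_rec algebra_simps)
qed

lemma one_minus_X: "k \<le> N \<Longrightarrow> 1 - W v N k / ffac k (real N) = (\<Sum>m<k. Z v N m / ffac (Suc m) (real N))"
proof (induction k)
  case 0 then show ?case by (simp add: W_0)
next
  case (Suc k)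
  have F: "0 < ffac k (real N)" using Suc.prems by (intro ffac_pos) auto
  have Nk: "0 < real N - real k" using Suc.prems by simp
  have "W v N (Suc k) / ffac (Suc k) (real N) = W v N k / ffac k (real N) - Z v N k / ffac (Suc k) (real N)"
    using F Nk by (simp add: W_rec ffac_Suc field_simps)
  then show ?case using Suc by simp
qed

end

lemma gauss_real: "(\<Sum>m<n. real m) = real n * (real n - 1) / 2"
  by (induction n) (simp_all add: algebra_simps)


definition rho :: "nat \<Rightarrow> nat \<Rightarrow> real" where
  "rho N' n' = (real N' / (real N' - real n')) ^ n'"

lemma alg_e1: fixes x q :: real assumes "1 < x"
  shows "q / x ^ 2 = q / (x * (x - 1)) - q / (x * (x - 1)) / x"
proof -
  have h: "x - 1 \<noteq> 0" "x \<noteq> 0" using assms by auto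
  have "q / (x * (x - 1)) - q / (x * (x - 1)) / x = (q * x - q) / (x * (x - 1) * x)"
    using h by (simp add: diff_divide_distrib divide_divide_eq_left right_diff_distrib)
  also have "(q * x - q) = q * (x - 1)" by (simp add: algebra_simps)
  also have "q * (x - 1) / (x * (x - 1) * x) = q / (x * x)"
    using h by simp
  finally show ?thesis by (simp add: power2_eq_square)
qed
lemma alg_e2: fixes x t q :: real assumes "2 < x"
  shows "x * (t + q) / (x * (x - 1))^2 = t / (x * (x - 1) * (x - 2)) * ((x - 2) / (x - 1)) + q / (x * (x - 1)) / (x - 1)"
proof -
  have h: "x \<noteq> 0" "x - 1 \<noteq> 0" "x - 2 \<noteq> 0" using assms by auto
  have e1: "t / (x * (x - 1) * (x - 2)) * ((x - 2) / (x - 1)) = t / (x * (x - 1) * (x - 1))"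
    using h by simp
  have e2: "x * (t + q) / (x * (x - 1))^2 = (t + q) / (x * (x - 1) * (x - 1))"
    using h by (simp add: power2_eq_square)
  show ?thesis unfolding e1 e2 by (simp add: add_divide_distrib)
qed

lemma ratio_bound:
  fixes A B R F x :: real
  assumes "A * x \<le> B * x ^ m" "x ^ (m + j) \<le> R * F" "0 < F" "0 < x" "0 \<le> B"
  shows "A / F \<le> B * R / x ^ (j + 1)"
proof -
  have "A * x * x ^ (m + j) \<le> B * x ^ m * x ^ (m + j)"
    using assms by (intro mult_right_mono) auto
  also have "\<dots> \<le> B * x ^ m * (R * F)"
    using assms by (intro mult_left_mono) auto
  finally have "(A * x ^ (j + 1)) * x ^ m \<le> (B * R * F) * x ^ m"
    by (simp add: power_add algebra_simps)
  then have "A * x ^ (j + 1) \<le> B * R * F" using assms(4) by simp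
  then show ?thesis using assms(3,4) by (simp add: field_simps)
qed

context
  fixes v :: "nat \<Rightarrow> nat" and N n :: nat
  assumes tot: "(\<Sum>i<N. v i) = N" and nN: "n < N" and N3: "3 \<le> N"
begin

lemma rho_ge1: "1 \<le> rho N n"
  unfolding rho_def using nN by (intro one_le_power) (simp add: field_simps)

lemma pow_le_rho: "k \<le> n \<Longrightarrow> real N ^ k \<le> rho N n * ffac k (real N)"
proof -
  assume k: "k \<le> n"
  define q where "q = real N / (real N - real n)"
  have q1: "1 \<le> q" unfolding q_def using nN by (simp add: field_simps)
  have Nn: "0 < real N - real n" using nN by simp
  have "real N ^ k = q ^ k * (real N - real n) ^ k"
    unfolding q_def using Nn by (simp add: power_divide)
  also have "\<dots> \<le> q ^ n * ffac k (real N)"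
    using k q1 nN Nn by (intro mult_mono power_increasing ffac_ge_pow) auto
  finally show ?thesis unfolding rho_def q_def .
qed

lemma z_upper: "m < n \<Longrightarrow> Z v N m / ffac (Suc m) (real N) \<le> real m * Qs v N * rho N n / real N ^ 2"
  using ratio_bound[of "Z v N m" "real N" "real m * Qs v N" m 1 "rho N n" "ffac (Suc m) (real N)"]
    Z_bound[OF tot, of m] pow_le_rho[of "Suc m"] nN ffac_pos[of "Suc m" N] Qs_nonneg[of v N]
  by (simp add: power2_eq_square)

lemma X_lower: "k \<le> n \<Longrightarrow> 1 - W v N k / ffac k (real N) \<le> (\<Sum>m<k. real m) * Qs v N * rho N n / real N ^ 2"
proof -
  assume k: "k \<le> n"
  have "1 - W v N k / ffac k (real N) = (\<Sum>m<k. Z v N m / ffac (Suc m) (real N))"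
    using one_minus_X[OF tot, of k] k nN by simp
  also have "\<dots> \<le> (\<Sum>m<k. real m * Qs v N * rho N n / real N ^ 2)"
    using k by (intro sum_mono z_upper) auto
  also have "\<dots> = (\<Sum>m<k. real m) * Qs v N * rho N n / real N ^ 2"
    by (simp add: sum_distrib_right sum_divide_distrib)
  finally show ?thesis .
qed


lemma Q_over_N2: "Qs v N / real N ^ 2 \<le> Qs v N / ffac 2 (real N)"
proof -
  have "0 < ffac 2 (real N)" using N3 by (intro ffac_pos) auto
  moreover have "ffac 2 (real N) \<le> real N ^ 2" using N3 by (intro ffac_le_pow) auto
  moreover have "0 < real N ^ 2" using N3 by simp
  ultimately show ?thesis using Qs_nonneg[of v N] by (intro divide_left_mono mult_pos_pos) auto
qed

lemma z_lower:
  fixes a c \<delta> :: real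
  defines "a \<equiv> (\<Sum>m<n. real m)"
    and "c \<equiv> Qs v N / ffac 2 (real N)"
    and "\<delta> \<equiv> (Qs v N / real N ^ 2) * (1 - a * rho N n * c)
             - real n ^ 2 * rho N n * (Ts v N + 2 * Qs v N) / real N ^ 3"
  shows "m < n \<Longrightarrow> real m * \<delta> \<le> Z v N m / ffac (Suc m) (real N)"
proof (induction m)
  case 0 then show ?case by (simp add: Z_0)
next
  case (Suc m)
  have mn: "Suc m < n" using Suc.prems .
  have IH: "real m * \<delta> \<le> Z v N m / ffac (Suc m) (real N)" using Suc.IH mn by simp
  define F0 where "F0 = ffac m (real N)"
  define F1 where "F1 = ffac (Suc m) (real N)"
  define F2 where "F2 = ffac (Suc (Suc m)) (real N)"
  have F0: "0 < F0" unfolding F0_def using mn nN by (intro ffac_pos) auto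
  have F1: "0 < F1" unfolding F1_def using mn nN by (intro ffac_pos) auto
  have F2: "0 < F2" unfolding F2_def using mn nN by (intro ffac_pos) auto
  have F1e: "F1 = F0 * (real N - real m)" unfolding F1_def F0_def by (simp add: ffac_Suc)
  have F2e: "F2 = F1 * (real N - real m - 1)" unfolding F2_def F1_def by (simp add: ffac_Suc)
  have Nm: "1 < real N - real m" using mn nN by simp
  let ?Q = "Qs v N" and ?T = "Ts v N" and ?K = "Ts v N + 2 * Qs v N"
  have Q0: "0 \<le> ?Q" by (rule Qs_nonneg)
  have K0: "0 \<le> ?K" using Ts_nonneg[of v N] Qs_nonneg[of v N] by simp
  have Z0: "0 \<le> Z v N m" by (rule Z_nonneg)
  have c0: "0 \<le> c" unfolding c_def using Q0 N3 by (intro divide_nonneg_pos ffac_pos) auto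
  have rho1: "1 \<le> rho N n" by (rule rho_ge1)
  have t1: "(real N - real m) * Z v N m / F2 = Z v N m / F1 + Z v N m / F2"
  proof -
    define d where "d = real N - real m - 1"
    have d: "0 < d" using Nm unfolding d_def by simp
    have "(d + 1) * Z v N m / (F1 * d) = Z v N m / F1 + Z v N m / (F1 * d)"
      using d F1 by (simp add: field_simps)
    moreover have "real N - real m = d + 1" unfolding d_def by simp
    ultimately show ?thesis unfolding F2e d_def by simp
  qed
  have t1': "Z v N m / F1 \<le> (real N - real m) * Z v N m / F2"
    unfolding t1 using Z0 F2 by simp
  have Xm: "1 - a * rho N n * c \<le> W v N m / F0"
  proof -
    have "1 - W v N m / F0 \<le> (\<Sum>j<m. real j) * ?Q * rho N n / real N ^ 2"
      unfolding F0_def using X_lower[of m] mn by simp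
    also have "\<dots> \<le> a * ?Q * rho N n / real N ^ 2"
      unfolding a_def using mn Q0 rho1
      by (intro divide_right_mono mult_right_mono sum_mono2) auto
    also have "\<dots> = a * rho N n * (?Q / real N ^ 2)" by simp
    also have "\<dots> \<le> a * rho N n * c"
      unfolding c_def using rho1 Q_over_N2 unfolding a_def
      by (intro mult_left_mono mult_nonneg_nonneg sum_nonneg) auto
    finally show ?thesis by simp
  qed
  have F2le: "F2 \<le> F0 * real N ^ 2"
  proof -
    have "F2 = F0 * ((real N - real m) * (real N - real m - 1))" unfolding F2e F1e by simp
    also have "\<dots> \<le> F0 * real N ^ 2"
      using F0 Nm by (intro mult_left_mono) (auto simp: power2_eq_square intro!: mult_mono)
    finally show ?thesis .
  qed
  have t2: "(?Q / real N ^ 2) * (1 - a * rho N n * c) \<le> ?Q * W v N m / F2"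
  proof -
    have "(?Q / real N ^ 2) * (1 - a * rho N n * c) \<le> (?Q / real N ^ 2) * (W v N m / F0)"
      using Xm Q0 by (intro mult_left_mono) auto
    also have "\<dots> = ?Q * W v N m / (F0 * real N ^ 2)" by simp
    also have "\<dots> \<le> ?Q * W v N m / F2"
      using F2le F2 Q0 W_nonneg[of v N m] by (intro divide_left_mono mult_nonneg_nonneg) auto
    finally show ?thesis .
  qed
  have t3: "(real m + 1) * U v N m / F2 \<le> real n ^ 2 * rho N n * ?K / real N ^ 3"
  proof -
    have a1: "(real m + 1) * U v N m * real N \<le> ((real m + 1) * real m * ?K) * real N ^ m"
      using U_bound[OF tot, of m] mn nN by (simp add: mult.assoc mult_left_mono)
    have "(real m + 1) * U v N m / F2 \<le> ((real m + 1) * real m * ?K) * rho N n / real N ^ (2 + 1)"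
      using ratio_bound[OF a1, of 2 "rho N n" F2] pow_le_rho[of "m + 2"] mn nN F2 K0
      unfolding F2_def by (simp add: numeral_2_eq_2)
    also have "\<dots> \<le> real n ^ 2 * rho N n * ?K / real N ^ 3"
    proof -
      have "(real m + 1) * real m \<le> real n * real n" using mn by (intro mult_mono) auto
      then have "((real m + 1) * real m) * (?K * rho N n) \<le> (real n * real n) * (?K * rho N n)"
        using K0 rho1 by (intro mult_right_mono) auto
      then have "(real m + 1) * real m * ?K * rho N n \<le> real n ^ 2 * rho N n * ?K"
        by (simp add: power2_eq_square mult_ac)
      then show ?thesis by (simp add: divide_right_mono)
    qed
    finally show ?thesis .
  qed
  have "Z v N (Suc m) / F2 \<ge> ((real N - real m) * Z v N m + ?Q * W v N m - (real m + 1) * U v N m) / F2"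
    using Z_lower[OF tot, of m] F2 unfolding F2_def by (intro divide_right_mono) auto
  moreover have "((real N - real m) * Z v N m + ?Q * W v N m - (real m + 1) * U v N m) / F2
     = (real N - real m) * Z v N m / F2 + ?Q * W v N m / F2 - (real m + 1) * U v N m / F2"
    by (simp add: add_divide_distrib diff_divide_distrib)
  ultimately have "Z v N (Suc m) / F2 \<ge> real m * \<delta> + (?Q / real N ^ 2) * (1 - a * rho N n * c)
      - real n ^ 2 * rho N n * ?K / real N ^ 3"
    using IH t1' t2 t3 unfolding F1_def by linarith
  moreover have "real (Suc m) * \<delta> = real m * \<delta> + \<delta>" by (simp add: algebra_simps)
  moreover have "\<delta> = ((?Q / real N ^ 2) * (1 - a * rho N n * c)
      - real n ^ 2 * rho N n * ?K / real N ^ 3)"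
    unfolding \<delta>_def by simp
  ultimately show ?case unfolding F2_def by linarith
qed


lemma comb_final:
  fixes a c D X :: real
  defines "a \<equiv> real n * (real n - 1) / 2"
    and "c \<equiv> Qs v N / ffac 2 (real N)"
    and "D \<equiv> Ts v N / ffac 3 (real N)"
    and "X \<equiv> W v N n / ffac n (real N)"
  shows "0 \<le> X" "X \<le> 1" "1 - X \<le> a * rho N n * c"
    "a * c - a * c / real N - a^2 * rho N n * c^2 - a * real n ^ 2 * rho N n * (D + 2 * c / real N) \<le> 1 - X"
proof -
  have Fn: "0 < ffac n (real N)" using nN by (intro ffac_pos) auto
  have F2: "ffac 2 (real N) = real N * (real N - 1)" by (simp add: ffac2)
  have F2p: "0 < ffac 2 (real N)" using N3 by (intro ffac_pos) auto
  have F3p: "0 < ffac 3 (real N)" using N3 by (intro ffac_pos) auto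
  have F3le: "ffac 3 (real N) \<le> real N ^ 3" using N3 by (intro ffac_le_pow) auto
  have Np: "0 < real N" using N3 by simp
  have aeq: "a = (\<Sum>m<n. real m)" unfolding a_def by (simp add: gauss_real)
  have a0: "0 \<le> a" unfolding aeq by (intro sum_nonneg) auto
  have rho1: "1 \<le> rho N n" by (rule rho_ge1)
  have Q0: "0 \<le> Qs v N" by (rule Qs_nonneg)
  have T0: "0 \<le> Ts v N" by (rule Ts_nonneg)
  have c0: "0 \<le> c" unfolding c_def using Q0 F2p by simp
  have QN2: "Qs v N / real N ^ 2 \<le> c" unfolding c_def by (rule Q_over_N2)
  have oneX: "1 - X = (\<Sum>m<n. Z v N m / ffac (Suc m) (real N))"
    unfolding X_def using one_minus_X[OF tot, of n] nN by simp
  show "0 \<le> X" unfolding X_def using W_nonneg[of v N n] Fn by simp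
  have "0 \<le> (\<Sum>m<n. Z v N m / ffac (Suc m) (real N))"
    using Z_nonneg nN by (intro sum_nonneg divide_nonneg_pos ffac_pos) auto
  then show "X \<le> 1" using oneX by simp
  have "1 - X \<le> a * Qs v N * rho N n / real N ^ 2"
    unfolding X_def aeq using X_lower[of n] by simp
  also have "\<dots> = a * rho N n * (Qs v N / real N ^ 2)" by simp
  also have "\<dots> \<le> a * rho N n * c" using QN2 a0 rho1 by (intro mult_left_mono) auto
  finally show "1 - X \<le> a * rho N n * c" .
  define \<delta> where "\<delta> = (Qs v N / real N ^ 2) * (1 - a * rho N n * c)
             - real n ^ 2 * rho N n * (Ts v N + 2 * Qs v N) / real N ^ 3"
  have "(\<Sum>m<n. real m * \<delta>) \<le> 1 - X"
    unfolding oneX \<delta>_def aeq c_def by (intro sum_mono z_lower) auto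
  then have low: "a * \<delta> \<le> 1 - X" unfolding aeq by (simp add: sum_distrib_right)
  have e1: "Qs v N / real N ^ 2 = c - c / real N"
    unfolding c_def F2 by (rule alg_e1) (use N3 in simp)
  have e2: "a * (Qs v N / real N ^ 2) * (a * rho N n * c) \<le> a^2 * rho N n * c^2"
  proof -
    have "a * (Qs v N / real N ^ 2) * (a * rho N n * c) = (a * a * rho N n * c) * (Qs v N / real N ^ 2)"
      by (simp add: mult_ac)
    also have "\<dots> \<le> (a * a * rho N n * c) * c" using QN2 a0 rho1 c0 by (intro mult_left_mono) auto
    finally show ?thesis by (simp add: power2_eq_square mult_ac)
  qed
  have e3: "(Ts v N + 2 * Qs v N) / real N ^ 3 \<le> D + 2 * c / real N"
  proof -
    have "Ts v N / real N ^ 3 \<le> D" unfolding D_def using F3le F3p T0 Np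
      by (intro divide_left_mono mult_pos_pos) auto
    moreover have "2 * Qs v N / real N ^ 3 = 2 * (Qs v N / real N ^ 2) / real N"
      by (simp add: power2_eq_square power3_eq_cube)
    moreover have "2 * (Qs v N / real N ^ 2) / real N \<le> 2 * c / real N"
      using QN2 Np by (intro divide_right_mono) auto
    moreover have "(Ts v N + 2 * Qs v N) / real N ^ 3 = Ts v N / real N ^ 3 + 2 * Qs v N / real N ^ 3"
      by (rule add_divide_distrib)
    ultimately show ?thesis by linarith
  qed
  have e3': "a * real n ^ 2 * rho N n * ((Ts v N + 2 * Qs v N) / real N ^ 3) \<le> a * real n ^ 2 * rho N n * (D + 2 * c / real N)"
    using e3 a0 rho1 by (intro mult_left_mono) auto
  have "a * \<delta> = a * (Qs v N / real N ^ 2) - a * (Qs v N / real N ^ 2) * (a * rho N n * c)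
      - a * real n ^ 2 * rho N n * ((Ts v N + 2 * Qs v N) / real N ^ 3)"
  proof -
    define q where "q = Qs v N / real N ^ 2"
    define k where "k = (Ts v N + 2 * Qs v N) / real N ^ 3"
    have "\<delta> = q * (1 - a * rho N n * c) - real n ^ 2 * rho N n * k"
      unfolding \<delta>_def q_def k_def by simp
    then have "a * \<delta> = a * (q * (1 - a * rho N n * c) - real n ^ 2 * rho N n * k)"
      by (simp only:)
    also have "\<dots> = a * q - a * q * (a * rho N n * c) - a * real n ^ 2 * rho N n * k"
      by (simp add: algebra_simps)
    finally have "a * \<delta> = a * q - a * q * (a * rho N n * c) - a * real n ^ 2 * rho N n * k" .
    then show ?thesis unfolding q_def k_def .
  qed
  moreover have "a * (Qs v N / real N ^ 2) = a * c - a * c / real N" unfolding e1 by (simp add: algebra_simps)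
  ultimately show "a * c - a * c / real N - a^2 * rho N n * c^2 - a * real n ^ 2 * rho N n * (D + 2 * c / real N) \<le> 1 - X"
    using low e2 e3' by linarith
qed

end

lemma c_facts:
  fixes v :: "nat \<Rightarrow> nat" and N :: nat
  assumes tot: "(\<Sum>i<N. v i) = N" and N3: "3 \<le> N"
  defines "c \<equiv> Qs v N / ffac 2 (real N)" and "D \<equiv> Ts v N / ffac 3 (real N)"
  shows "0 \<le> c" "c \<le> 1" "0 \<le> D" "c^2 \<le> D + c / (real N - 1)"
proof -
  have F2: "ffac 2 (real N) = real N * (real N - 1)" by (simp add: ffac2)
  have F3: "ffac 3 (real N) = real N * (real N - 1) * (real N - 2)" by (simp add: ffac3)
  have F2p: "0 < ffac 2 (real N)" using N3 by (intro ffac_pos) auto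
  have F3p: "0 < ffac 3 (real N)" using N3 by (intro ffac_pos) auto
  have totr: "(\<Sum>i<N. real (v i)) = real N" using tot by (metis of_nat_sum)
  show c0: "0 \<le> c" unfolding c_def using Qs_nonneg[of v N] F2p by simp
  show "0 \<le> D" unfolding D_def using Ts_nonneg[of v N] F3p by simp
  have vle: "real (v i) \<le> real N" if "i < N" for i
  proof -
    have "v i \<le> (\<Sum>i<N. v i)" using that by (intro member_le_sum) auto
    then show ?thesis using tot by simp
  qed
  have "Qs v N = (\<Sum>i<N. real (v i) * real (v i)) - real N"
    unfolding Qs_def ffac2 totr[symmetric] by (simp add: sum_subtractf algebra_simps)
  also have "(\<Sum>i<N. real (v i) * real (v i)) \<le> (\<Sum>i<N. real (v i) * real N)"
    using vle by (intro sum_mono mult_left_mono) auto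
  also have "\<dots> = real N * real N" by (simp add: sum_distrib_right[symmetric] totr)
  finally have "Qs v N \<le> ffac 2 (real N)" unfolding F2 by (simp add: algebra_simps)
  then show "c \<le> 1" unfolding c_def using F2p by simp
  \<comment> \<open>Cauchy-Schwarz\<close>
  have "(\<Sum>i<N. sqrt (real (v i)) * (sqrt (real (v i)) * (real (v i) - 1)))^2
      \<le> (\<Sum>i<N. (sqrt (real (v i)))^2) * (\<Sum>i<N. (sqrt (real (v i)) * (real (v i) - 1))^2)"
    by (rule Cauchy_Schwarz_ineq_sum)
  moreover have "(\<Sum>i<N. sqrt (real (v i)) * (sqrt (real (v i)) * (real (v i) - 1))) = Qs v N"
    unfolding Qs_def ffac2 by (intro sum.cong) (auto simp: mult.assoc[symmetric])
  moreover have "(\<Sum>i<N. (sqrt (real (v i)))^2) = real N" using totr by simp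
  moreover have "(\<Sum>i<N. (sqrt (real (v i)) * (real (v i) - 1))^2) = Ts v N + Qs v N"
    unfolding Ts_def Qs_def ffac2 ffac3 sum.distrib[symmetric]
    by (intro sum.cong) (auto simp: power_mult_distrib power2_eq_square algebra_simps)
  ultimately have CS: "(Qs v N)^2 \<le> real N * (Ts v N + Qs v N)" by simp
  have "c^2 = (Qs v N)^2 / (real N * (real N - 1))^2" unfolding c_def F2 by (simp add: power_divide)
  also have "\<dots> \<le> real N * (Ts v N + Qs v N) / (real N * (real N - 1))^2"
    using CS by (intro divide_right_mono) auto
  also have "\<dots> = D * ((real N - 2) / (real N - 1)) + c / (real N - 1)"
    unfolding D_def c_def F2 F3 by (rule alg_e2) (use N3 in simp)
  also have "\<dots> \<le> D + c / (real N - 1)"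
  proof -
    have "(real N - 2) / (real N - 1) \<le> 1" using N3 by simp
    then have "D * ((real N - 2) / (real N - 1)) \<le> D * 1"
      using \<open>0 \<le> D\<close> by (intro mult_left_mono) auto
    then show ?thesis by simp
  qed
  finally show "c^2 \<le> D + c / (real N - 1)" .
qed



lemma exp_neg_upper: fixes y :: real assumes "0 \<le> y" shows "exp (- y) \<le> 1 - y + y^2"
proof -
  have "exp (- y) * (1 + y) \<le> exp (- y) * exp y"
    by (intro mult_left_mono) (auto simp: exp_ge_add_one_self)
  also have "\<dots> = 1" by (simp add: exp_add[symmetric])
  finally have a: "exp (- y) * (1 + y) \<le> 1" .
  have b: "1 \<le> (1 - y + y^2) * (1 + y)" using assms by (simp add: algebra_simps power2_eq_square power3_eq_cube[symmetric])
  from a b have "exp (- y) * (1 + y) \<le> (1 - y + y^2) * (1 + y)" by linarith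
  then show ?thesis using assms by (simp add: mult_le_cancel_right_pos add_pos_nonneg)
qed

lemma exp_neg_lower: fixes y :: real shows "1 - y \<le> exp (- y)"
  using exp_ge_add_one_self[of "- y"] by simp

lemma step_err:
  fixes a rho x m2 c D X :: real
  assumes a0: "0 \<le> a" and rho1: "1 \<le> rho" and x3: "3 \<le> x" and m2: "0 \<le> m2"
    and X0: "0 \<le> X" and X1: "X \<le> 1" and c0: "0 \<le> c" and c1: "c \<le> 1" and D0: "0 \<le> D"
    and csq: "c^2 \<le> D + c / (x - 1)"
    and up: "1 - X \<le> a * rho * c"
    and lo: "a * c - a * c / x - a^2 * rho * c^2 - a * m2 * rho * (D + 2 * c / x) \<le> 1 - X"
  shows "\<bar>X - exp (- (a * c))\<bar> \<le>
     (a * (rho - 1) + a / x + 2 * a * m2 * rho / x + (a^2 * rho + a^2) / (x - 1)) * c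
     + (a^2 * rho + a * m2 * rho + a^2) * D"
proof -
  have ac0: "0 \<le> a * c" using a0 c0 by simp
  have e_lo: "1 - a * c \<le> exp (- (a * c))" by (rule exp_neg_lower)
  have e_up: "exp (- (a * c)) \<le> 1 - a * c + (a * c)^2" by (rule exp_neg_upper[OF ac0])
  have x1: "0 < x - 1" using x3 by simp
  have xp: "0 < x" using x3 by simp
  have r0: "0 \<le> rho" using rho1 by simp
  have A: "a^2 * rho * c^2 \<le> a^2 * rho * D + a^2 * rho * (c / (x - 1))"
    using csq a0 r0 by (metis distrib_left mult_left_mono zero_le_power2 mult_nonneg_nonneg)
  have B: "a^2 * c^2 \<le> a^2 * D + a^2 * (c / (x - 1))"
    using csq by (metis distrib_left mult_left_mono zero_le_power2)
  have T1: "0 \<le> a * (rho - 1) * c" using a0 rho1 c0 by simp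
  have T2: "0 \<le> a / x * c" using a0 xp c0 by simp
  have T3: "0 \<le> 2 * a * m2 * rho / x * c" using a0 xp c0 m2 r0 by simp
  have T4: "0 \<le> a^2 * rho * (c / (x - 1))" using x1 c0 r0 by simp
  have T5: "0 \<le> a^2 * (c / (x - 1))" using x1 c0 by simp
  have T6: "0 \<le> a^2 * rho * D" "0 \<le> a * m2 * rho * D" "0 \<le> a^2 * D" using a0 m2 r0 D0 by simp_all
  have eq: "(a * (rho - 1) + a / x + 2 * a * m2 * rho / x + (a^2 * rho + a^2) / (x - 1)) * c
     + (a^2 * rho + a * m2 * rho + a^2) * D
     = a * (rho - 1) * c + a / x * c + 2 * a * m2 * rho / x * c + a^2 * rho * (c / (x - 1))
       + a^2 * (c / (x - 1)) + a^2 * rho * D + a * m2 * rho * D + a^2 * D"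
    by (simp add: algebra_simps add_divide_distrib)
  have lo': "X - 1 + a * c \<le> a * c / x + a^2 * rho * c^2 + a * m2 * rho * D + 2 * a * m2 * rho / x * c"
    using lo by (simp add: algebra_simps)
  have up': "1 - a * c + (a * c)^2 - X \<le> a * (rho - 1) * c + a^2 * c^2"
    using up by (simp add: algebra_simps power2_eq_square)
  have "X - exp (- (a * c)) \<le> a * c / x + a^2 * rho * c^2 + a * m2 * rho * D + 2 * a * m2 * rho / x * c"
    using lo' e_lo by linarith
  moreover have "exp (- (a * c)) - X \<le> a * (rho - 1) * c + a^2 * c^2"
    using up' e_up by linarith
  moreover have "a * c / x = a / x * c" by simp
  ultimately show ?thesis unfolding eq abs_le_iff using A B T1 T2 T3 T4 T5 T6 by linarith
qed

lemma prod_diff_le: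
  fixes x y :: "nat \<Rightarrow> real"
  assumes "finite A" "\<And>r. r \<in> A \<Longrightarrow> 0 \<le> x r \<and> x r \<le> 1 \<and> 0 \<le> y r \<and> y r \<le> 1"
  shows "\<bar>(\<Prod>r\<in>A. x r) - (\<Prod>r\<in>A. y r)\<bar> \<le> (\<Sum>r\<in>A. \<bar>x r - y r\<bar>)"
  using assms
proof (induction A rule: finite_induct)
  case empty then show ?case by simp
next
  case (insert b A)
  let ?P = "\<Prod>r\<in>A. x r" and ?Q = "\<Prod>r\<in>A. y r"
  have xb: "0 \<le> x b" "x b \<le> 1" and yb: "0 \<le> y b" "y b \<le> 1" using insert.prems by auto
  have Q: "0 \<le> ?Q" "?Q \<le> 1" using insert.prems
    by (auto intro!: prod_nonneg prod_le_1)
  have IH: "\<bar>?P - ?Q\<bar> \<le> (\<Sum>r\<in>A. \<bar>x r - y r\<bar>)" using insert by auto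
  have "x b * ?P - y b * ?Q = x b * (?P - ?Q) + (x b - y b) * ?Q" by (simp add: algebra_simps)
  then have "\<bar>x b * ?P - y b * ?Q\<bar> \<le> \<bar>x b\<bar> * \<bar>?P - ?Q\<bar> + \<bar>x b - y b\<bar> * \<bar>?Q\<bar>"
    by (metis abs_mult abs_triangle_ineq)
  also have "\<dots> \<le> 1 * \<bar>?P - ?Q\<bar> + \<bar>x b - y b\<bar> * 1"
    using xb Q by (intro add_mono mult_mono) auto
  finally show ?case using insert IH by simp
qed

lemma exp_lip: fixes a S t :: real assumes "0 \<le> a" "t \<le> S" "0 \<le> t"
  shows "\<bar>exp (- (a * S)) - exp (- (a * t))\<bar> \<le> a * (S - t)"
proof -
  have "exp (- (a * S)) \<le> exp (- (a * t))" using assms by (simp add: mult_left_mono)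
  moreover have e: "- (a * S) = - (a * t) + - (a * (S - t))" by (simp add: algebra_simps)
  have "exp (- (a * S)) = exp (- (a * t)) * exp (- (a * (S - t)))"
    by (subst e) (rule exp_add)
  then have "exp (- (a * t)) - exp (- (a * S)) = exp (- (a * t)) * (1 - exp (- (a * (S - t))))"
    by (simp add: right_diff_distrib)
  moreover have "exp (- (a * t)) * (1 - exp (- (a * (S - t)))) \<le> 1 * (a * (S - t))"
  proof (rule mult_mono)
    show "exp (- (a * t)) \<le> 1" using assms by simp
    show "1 - exp (- (a * (S - t))) \<le> a * (S - t)" using exp_neg_lower[of "a * (S - t)"] by simp
  qed (use assms in auto)
  ultimately show ?thesis by simp
qed


lemma c_eta: fixes c \<eta> :: real assumes "0 \<le> c" "0 < \<eta>" shows "c \<le> \<eta> + c^2 / \<eta>"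
proof -
  have h: "0 \<le> (c - \<eta>)^2" by simp
  have "c * \<eta> * 2 \<le> \<eta> * \<eta> + c * c" using h by (simp add: power2_eq_square algebra_simps)
  moreover have "0 \<le> c * \<eta>" using assms by simp
  ultimately have "c * \<eta> \<le> \<eta> * \<eta> + c^2" by (simp add: power2_eq_square)
  then show ?thesis using assms by (simp add: field_simps power2_eq_square)
qed

lemma path_bound:
  fixes X c D :: "nat \<Rightarrow> real" and \<tau> :: nat and a t \<eta> E1 K x :: real
  assumes a0: "0 \<le> a" and t0: "0 < t" and eta: "0 < \<eta>" and x3: "3 \<le> x" and E0: "0 \<le> E1" and K0: "0 \<le> K"
    and Xb: "\<And>r. 1 \<le> r \<Longrightarrow> 0 \<le> X r \<and> X r \<le> 1"
    and cb: "\<And>r. 1 \<le> r \<Longrightarrow> 0 \<le> c r \<and> c r \<le> 1"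
    and Db: "\<And>r. 1 \<le> r \<Longrightarrow> 0 \<le> D r"
    and csq: "\<And>r. 1 \<le> r \<Longrightarrow> (c r)^2 \<le> D r + c r / (x - 1)"
    and err: "\<And>r. 1 \<le> r \<Longrightarrow> \<bar>X r - exp (- (a * c r))\<bar> \<le> E1 * c r + K * D r"
    and tau1: "1 \<le> \<tau>" and S_ge: "t \<le> (\<Sum>r\<in>{1..\<tau>}. c r)" and S_lt: "(\<Sum>r\<in>{1..\<tau> - 1}. c r) < t"
  shows "\<bar>(\<Prod>r\<in>{1..\<tau>}. X r) - exp (- (a * t))\<bar>
     \<le> E1 * (t + 1) + K * (\<Sum>r\<in>{1..\<tau>}. D r) + a * \<eta> + a * (((\<Sum>r\<in>{1..\<tau>}. D r) + 1 / (x - 1)) / \<eta>)"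
proof -
  define S where "S = (\<Sum>r\<in>{1..\<tau>}. c r)"
  define SD where "SD = (\<Sum>r\<in>{1..\<tau>}. D r)"
  have split: "{1..\<tau>} = insert \<tau> {1..\<tau> - 1}" using tau1 by auto
  have S_eq: "S = (\<Sum>r\<in>{1..\<tau> - 1}. c r) + c \<tau>"
    unfolding S_def split using tau1 by (subst sum.insert) auto
  have ct: "0 \<le> c \<tau>" "c \<tau> \<le> 1" using cb tau1 by auto
  have S_le: "S \<le> t + 1" using S_eq S_lt ct by linarith
  have St: "S - t \<le> c \<tau>" using S_eq S_lt by linarith
  have SD_ge: "D \<tau> \<le> SD" unfolding SD_def using Db tau1
    by (intro member_le_sum) auto
  have SD0: "0 \<le> SD" unfolding SD_def using Db by (intro sum_nonneg) auto
  have expS: "exp (- (a * S)) = (\<Prod>r\<in>{1..\<tau>}. exp (- (a * c r)))"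
    unfolding S_def sum_distrib_left sum_negf[symmetric] by (rule exp_sum) simp
  have "\<bar>(\<Prod>r\<in>{1..\<tau>}. X r) - exp (- (a * S))\<bar> \<le> (\<Sum>r\<in>{1..\<tau>}. \<bar>X r - exp (- (a * c r))\<bar>)"
    unfolding expS using Xb cb a0
    by (intro prod_diff_le) (auto simp: mult_nonneg_nonneg)
  also have "\<dots> \<le> (\<Sum>r\<in>{1..\<tau>}. E1 * c r + K * D r)" using err by (intro sum_mono) auto
  also have "\<dots> = E1 * S + K * SD" unfolding S_def SD_def by (simp add: sum.distrib sum_distrib_left)
  also have "\<dots> \<le> E1 * (t + 1) + K * SD" using S_le E0 by (simp add: mult_left_mono)
  finally have P1: "\<bar>(\<Prod>r\<in>{1..\<tau>}. X r) - exp (- (a * S))\<bar> \<le> E1 * (t + 1) + K * SD" .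
  have "\<bar>exp (- (a * S)) - exp (- (a * t))\<bar> \<le> a * (S - t)"
    using a0 S_ge t0 unfolding S_def by (intro exp_lip) auto
  also have "\<dots> \<le> a * c \<tau>" using St a0 by (simp add: mult_left_mono)
  also have "\<dots> \<le> a * (\<eta> + (c \<tau>)^2 / \<eta>)" using c_eta[OF ct(1) eta] a0 by (simp add: mult_left_mono)
  also have "\<dots> \<le> a * (\<eta> + (SD + 1 / (x - 1)) / \<eta>)"
  proof -
    have "(c \<tau>)^2 \<le> D \<tau> + c \<tau> / (x - 1)" using csq tau1 by auto
    also have "c \<tau> / (x - 1) \<le> 1 / (x - 1)" using ct x3 by (intro divide_right_mono) auto
    finally have "(c \<tau>)^2 \<le> SD + 1 / (x - 1)" using SD_ge by simp
    then show ?thesis using a0 eta by (intro mult_left_mono add_left_mono divide_right_mono) auto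
  qed
  also have "\<dots> = a * \<eta> + a * ((SD + 1 / (x - 1)) / \<eta>)" by (simp only: distrib_left)
  finally have P2: "\<bar>exp (- (a * S)) - exp (- (a * t))\<bar> \<le> a * \<eta> + a * ((SD + 1 / (x - 1)) / \<eta>)" .
  show ?thesis using P1 P2 unfolding SD_def[symmetric] by linarith
qed



lemma ffac_nat_le_pow: "ffac k (real (m::nat)) \<le> real m ^ k"
proof (cases "k \<le> m")
  case True then show ?thesis using ffac_le_pow by blast
next
  case False
  then have "ffac k (real m) = 0" unfolding ffac_def
    by (intro prod_zero) (auto intro!: bexI[of _ m])
  then show ?thesis by simp
qed

lemma rho_ge1': "n < N \<Longrightarrow> 1 \<le> rho N n"
  unfolding rho_def by (intro one_le_power) (simp add: field_simps)

locale fixedN = prob_space M for M :: "'a measure" +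
  fixes N :: nat and \<nu> :: "nat \<Rightarrow> nat \<Rightarrow> 'a \<Rightarrow> nat"
  assumes meas: "\<And>s i. 1 \<le> s \<Longrightarrow> i < N \<Longrightarrow> \<nu> s i \<in> M \<rightarrow>\<^sub>M count_space UNIV"
    and total: "\<And>s \<omega>. 1 \<le> s \<Longrightarrow> \<omega> \<in> space M \<Longrightarrow> (\<Sum>i<N. \<nu> s i \<omega>) = N"
begin

definition gens :: "nat \<Rightarrow> 'a set set" where
  "gens t = {\<nu> s i -` A \<inter> space M | s i A. 1 \<le> s \<and> s \<le> t \<and> i < N}"

lemma gens_sub: "gens t \<subseteq> sets M"
proof
  fix X assume "X \<in> gens t"
  then obtain s i A where X: "X = \<nu> s i -` A \<inter> space M" and s: "1 \<le> s" "i < N"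
    unfolding gens_def by blast
  show "X \<in> sets M" unfolding X using measurable_sets[OF meas[OF s], of A] by simp
qed

lemma gens_pow: "gens t \<subseteq> Pow (space M)"
  unfolding gens_def by auto

lemma filt_eq: "filt M N \<nu> t = sigma (space M) (gens t)"
  unfolding filt_def gens_def ..

lemma space_filt: "space (filt M N \<nu> t) = space M"
  unfolding filt_eq using gens_pow by (simp add: space_measure_of)

lemma sets_filt: "sets (filt M N \<nu> t) = sigma_sets (space M) (gens t)"
  unfolding filt_eq using gens_pow by (simp add: sets_measure_of)

lemma subalg: "subalgebra M (filt M N \<nu> t)"
  unfolding subalgebra_def
proof
  show "space (filt M N \<nu> t) = space M" by (rule space_filt)
  show "sets (filt M N \<nu> t) \<subseteq> sets M"
    unfolding sets_filt using gens_sub by (rule sets.sigma_sets_subset)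
qed

lemma sfs: "sigma_finite_subalgebra M (filt M N \<nu> t)"
proof -
  have "finite_measure_subalgebra M (filt M N \<nu> t)"
    by (intro finite_measure_subalgebra.intro finite_measure_axioms)
       (simp add: finite_measure_subalgebra_axioms_def subalg)
  then show ?thesis by (rule finite_measure_subalgebra_is_sigma_finite)
qed

lemma meas_filt: "1 \<le> s \<Longrightarrow> s \<le> t \<Longrightarrow> i < N \<Longrightarrow> \<nu> s i \<in> filt M N \<nu> t \<rightarrow>\<^sub>M count_space UNIV"
proof (rule measurableI)
  fix A assume "1 \<le> s" "s \<le> t" "i < N"
  then have "\<nu> s i -` A \<inter> space M \<in> gens t" unfolding gens_def by blast
  then show "\<nu> s i -` A \<inter> space (filt M N \<nu> t) \<in> sets (filt M N \<nu> t)"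
    unfolding space_filt sets_filt by (rule sigma_sets.Basic)
qed (auto simp: space_filt)

lemma rv_filt: "1 \<le> s \<Longrightarrow> s \<le> t \<Longrightarrow> i < N \<Longrightarrow> (\<lambda>\<omega>. f (\<nu> s i \<omega>) :: real) \<in> borel_measurable (filt M N \<nu> t)"
  using measurable_compose[OF meas_filt, of s t i f borel] by (simp add: comp_def)

lemma rv_M: "1 \<le> s \<Longrightarrow> i < N \<Longrightarrow> (\<lambda>\<omega>. f (\<nu> s i \<omega>) :: real) \<in> borel_measurable M"
  using measurable_compose[OF meas, of s i f borel] by (simp add: comp_def)

lemma nu_le: "1 \<le> s \<Longrightarrow> \<omega> \<in> space M \<Longrightarrow> i < N \<Longrightarrow> \<nu> s i \<omega> \<le> N"
  using member_le_sum[of i "{..<N}" "\<lambda>i. \<nu> s i \<omega>"] total[of s \<omega>] by simp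

lemma cN_meas_filt: "1 \<le> s \<Longrightarrow> s \<le> t \<Longrightarrow> cN N \<nu> s \<in> borel_measurable (filt M N \<nu> t)"
  unfolding cN_def[abs_def] by (intro borel_measurable_divide borel_measurable_sum rv_filt[where f="\<lambda>k. ffac 2 (real k)"]) auto

lemma cN_meas: "1 \<le> s \<Longrightarrow> cN N \<nu> s \<in> borel_measurable M"
  unfolding cN_def[abs_def] by (intro borel_measurable_divide borel_measurable_sum rv_M[where f="\<lambda>k. ffac 2 (real k)"]) auto

definition Dn :: "nat \<Rightarrow> 'a \<Rightarrow> real" where
  "Dn r \<omega> = (\<Sum>i<N. ffac 3 (real (\<nu> r i \<omega>))) / ffac 3 (real N)"

lemma Dn_meas: "1 \<le> s \<Longrightarrow> Dn s \<in> borel_measurable M"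
  unfolding Dn_def[abs_def] by (intro borel_measurable_divide borel_measurable_sum rv_M[where f="\<lambda>k. ffac 3 (real k)"]) auto

definition Aset :: "real \<Rightarrow> nat \<Rightarrow> 'a set" where
  "Aset t r = {\<omega> \<in> space M. (\<Sum>s\<in>{1..r - 1}. cN N \<nu> s \<omega>) < t}"

lemma Aset_filt: "Aset t r \<in> sets (filt M N \<nu> (r - 1))"
proof -
  have m: "(\<lambda>\<omega>. \<Sum>s\<in>{1..r - 1}. cN N \<nu> s \<omega>) \<in> borel_measurable (filt M N \<nu> (r - 1))"
    by (intro borel_measurable_sum cN_meas_filt) auto
  have "Aset t r = (\<lambda>\<omega>. \<Sum>s\<in>{1..r - 1}. cN N \<nu> s \<omega>) -` {..<t} \<inter> space (filt M N \<nu> (r - 1))"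
    unfolding Aset_def space_filt by auto
  then show ?thesis using measurable_sets[OF m, of "{..<t}"] by simp
qed

lemma Aset_M: "Aset t r \<in> sets M"
  using Aset_filt subalg unfolding subalgebra_def by blast


lemma bounded_int:
  assumes "f \<in> borel_measurable M" "\<And>\<omega>. \<omega> \<in> space M \<Longrightarrow> \<bar>f \<omega>\<bar> \<le> B"
  shows "integrable M (f :: 'a \<Rightarrow> real)"
  using assms by (intro integrable_const_bound[where B=B]) auto

lemma g_int:
  assumes "1 \<le> r" "i < N" "A \<in> sets M"
  shows "integrable M (\<lambda>\<omega>. indicator A \<omega> * ffac k (real (\<nu> r i \<omega>)))"
proof (rule bounded_int[where B="real N ^ k"])
  show "(\<lambda>\<omega>. indicator A \<omega> * ffac k (real (\<nu> r i \<omega>))) \<in> borel_measurable M"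
    using assms by (intro borel_measurable_times borel_measurable_indicator rv_M[where f="\<lambda>m. ffac k (real m)"]) auto
  fix \<omega> assume w: "\<omega> \<in> space M"
  have "ffac k (real (\<nu> r i \<omega>)) \<le> real (\<nu> r i \<omega>) ^ k" by (rule ffac_nat_le_pow)
  also have "\<dots> \<le> real N ^ k" using nu_le[OF assms(1) w assms(2)] by (intro power_mono) auto
  finally have "\<bar>ffac k (real (\<nu> r i \<omega>))\<bar> \<le> real N ^ k" using ffac_nat_nonneg by simp
  then show "\<bar>indicator A \<omega> * ffac k (real (\<nu> r i \<omega>))\<bar> \<le> real N ^ k"
    by (cases "\<omega> \<in> A") auto
qed

lemma ce_swap:
  assumes r: "1 \<le> r" and A: "A \<in> sets (filt M N \<nu> (r - 1))" and i: "i < N"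
  shows "integrable M (\<lambda>\<omega>. indicator A \<omega> * real_cond_exp M (filt M N \<nu> (r - 1)) (\<lambda>x. ffac k (real (\<nu> r i x))) \<omega>)"
    and "(\<integral>\<omega>. indicator A \<omega> * real_cond_exp M (filt M N \<nu> (r - 1)) (\<lambda>x. ffac k (real (\<nu> r i x))) \<omega> \<partial>M)
       = (\<integral>\<omega>. indicator A \<omega> * ffac k (real (\<nu> r i \<omega>)) \<partial>M)"
proof -
  interpret S: sigma_finite_subalgebra M "filt M N \<nu> (r - 1)" by (rule sfs)
  have AM: "A \<in> sets M" using A subalg unfolding subalgebra_def by blast
  have ind: "indicator A \<in> borel_measurable (filt M N \<nu> (r - 1))" using A by simp
  show "integrable M (\<lambda>\<omega>. indicator A \<omega> * real_cond_exp M (filt M N \<nu> (r - 1)) (\<lambda>x. ffac k (real (\<nu> r i x))) \<omega>)"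
    by (rule S.real_cond_exp_intg(1)[OF g_int[OF r i AM] ind rv_M[OF r i]])
  show "(\<integral>\<omega>. indicator A \<omega> * real_cond_exp M (filt M N \<nu> (r - 1)) (\<lambda>x. ffac k (real (\<nu> r i x))) \<omega> \<partial>M)
       = (\<integral>\<omega>. indicator A \<omega> * ffac k (real (\<nu> r i \<omega>)) \<partial>M)"
    by (rule S.real_cond_exp_intg(2)[OF g_int[OF r i AM] ind rv_M[OF r i]])
qed

lemma key_ineq:
  fixes bN :: real
  assumes mom: "AE \<omega> in M. \<forall>s\<ge>1.
         (\<Sum>i<N. real_cond_exp M (filt M N \<nu> (s - 1)) (\<lambda>x. ffac 3 (real (\<nu> s i x))) \<omega>) / ffac 3 (real N)
         \<le> bN * ((\<Sum>i<N. real_cond_exp M (filt M N \<nu> (s - 1)) (\<lambda>x. ffac 2 (real (\<nu> s i x))) \<omega>) / ffac 2 (real N))"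
    and r: "1 \<le> r" and A: "A \<in> sets (filt M N \<nu> (r - 1))"
  shows "(\<integral>\<omega>. indicator A \<omega> * Dn r \<omega> \<partial>M) \<le> bN * (\<integral>\<omega>. indicator A \<omega> * cN N \<nu> r \<omega> \<partial>M)"
proof -
  let ?F = "filt M N \<nu> (r - 1)"
  define e3 where "e3 i = real_cond_exp M ?F (\<lambda>x. ffac 3 (real (\<nu> r i x)))" for i
  define e2 where "e2 i = real_cond_exp M ?F (\<lambda>x. ffac 2 (real (\<nu> r i x)))" for i
  have AM: "A \<in> sets M" using A subalg unfolding subalgebra_def by blast
  have I3: "(\<integral>\<omega>. (\<Sum>i<N. indicator A \<omega> * ffac 3 (real (\<nu> r i \<omega>))) \<partial>M)
     = (\<Sum>i<N. (\<integral>\<omega>. indicator A \<omega> * ffac 3 (real (\<nu> r i \<omega>)) \<partial>M))"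
    by (rule Bochner_Integration.integral_sum[where f="\<lambda>i \<omega>. indicator A \<omega> * ffac 3 (real (\<nu> r i \<omega>))"]) (rule g_int[OF r _ AM], simp)
  have I2: "(\<integral>\<omega>. (\<Sum>i<N. indicator A \<omega> * ffac 2 (real (\<nu> r i \<omega>))) \<partial>M)
     = (\<Sum>i<N. (\<integral>\<omega>. indicator A \<omega> * ffac 2 (real (\<nu> r i \<omega>)) \<partial>M))"
    by (rule Bochner_Integration.integral_sum[where f="\<lambda>i \<omega>. indicator A \<omega> * ffac 2 (real (\<nu> r i \<omega>))"]) (rule g_int[OF r _ AM], simp)
  have J3: "(\<integral>\<omega>. (\<Sum>i<N. indicator A \<omega> * e3 i \<omega>) \<partial>M) = (\<Sum>i<N. (\<integral>\<omega>. indicator A \<omega> * e3 i \<omega> \<partial>M))"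
    by (rule Bochner_Integration.integral_sum[where f="\<lambda>i \<omega>. indicator A \<omega> * e3 i \<omega>"]) (unfold e3_def, rule ce_swap(1)[OF r A], simp)
  have J2: "(\<integral>\<omega>. (\<Sum>i<N. indicator A \<omega> * e2 i \<omega>) \<partial>M) = (\<Sum>i<N. (\<integral>\<omega>. indicator A \<omega> * e2 i \<omega> \<partial>M))"
    by (rule Bochner_Integration.integral_sum[where f="\<lambda>i \<omega>. indicator A \<omega> * e2 i \<omega>"]) (unfold e2_def, rule ce_swap(1)[OF r A], simp)
  have S3: "(\<Sum>i<N. (\<integral>\<omega>. indicator A \<omega> * e3 i \<omega> \<partial>M)) = (\<Sum>i<N. (\<integral>\<omega>. indicator A \<omega> * ffac 3 (real (\<nu> r i \<omega>)) \<partial>M))"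
    unfolding e3_def by (intro sum.cong refl ce_swap(2)[OF r A]) simp
  have S2': "(\<Sum>i<N. (\<integral>\<omega>. indicator A \<omega> * e2 i \<omega> \<partial>M)) = (\<Sum>i<N. (\<integral>\<omega>. indicator A \<omega> * ffac 2 (real (\<nu> r i \<omega>)) \<partial>M))"
    unfolding e2_def by (intro sum.cong refl ce_swap(2)[OF r A]) simp
  have fD: "(\<lambda>\<omega>. indicator A \<omega> * Dn r \<omega>) = (\<lambda>\<omega>. (\<Sum>i<N. indicator A \<omega> * ffac 3 (real (\<nu> r i \<omega>))) / ffac 3 (real N))"
    unfolding Dn_def by (simp add: sum_distrib_left fun_eq_iff)
  have fc: "(\<lambda>\<omega>. indicator A \<omega> * cN N \<nu> r \<omega>) = (\<lambda>\<omega>. (\<Sum>i<N. indicator A \<omega> * ffac 2 (real (\<nu> r i \<omega>))) / ffac 2 (real N))"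
    unfolding cN_def by (simp add: sum_distrib_left fun_eq_iff)
  have f3: "(\<lambda>\<omega>. indicator A \<omega> * ((\<Sum>i<N. e3 i \<omega>) / ffac 3 (real N))) = (\<lambda>\<omega>. (\<Sum>i<N. indicator A \<omega> * e3 i \<omega>) / ffac 3 (real N))"
    by (simp add: sum_distrib_left fun_eq_iff)
  have f2: "(\<lambda>\<omega>. indicator A \<omega> * (bN * ((\<Sum>i<N. e2 i \<omega>) / ffac 2 (real N)))) = (\<lambda>\<omega>. bN * ((\<Sum>i<N. indicator A \<omega> * e2 i \<omega>) / ffac 2 (real N)))"
    by (rule ext) (simp only: sum_distrib_left[symmetric] mult_ac times_divide_eq_right)
  have int3: "integrable M (\<lambda>\<omega>. (\<Sum>i<N. indicator A \<omega> * e3 i \<omega>))"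
    by (rule Bochner_Integration.integrable_sum[where f="\<lambda>i \<omega>. indicator A \<omega> * e3 i \<omega>"]) (unfold e3_def, rule ce_swap(1)[OF r A], simp)
  have int2: "integrable M (\<lambda>\<omega>. (\<Sum>i<N. indicator A \<omega> * e2 i \<omega>))"
    by (rule Bochner_Integration.integrable_sum[where f="\<lambda>i \<omega>. indicator A \<omega> * e2 i \<omega>"]) (unfold e2_def, rule ce_swap(1)[OF r A], simp)
  have "(\<integral>\<omega>. indicator A \<omega> * Dn r \<omega> \<partial>M) = (\<Sum>i<N. (\<integral>\<omega>. indicator A \<omega> * e3 i \<omega> \<partial>M)) / ffac 3 (real N)"
    unfolding fD S3 I3[symmetric] by (rule integral_divide_zero)
  also have "\<dots> = (\<integral>\<omega>. indicator A \<omega> * ((\<Sum>i<N. e3 i \<omega>) / ffac 3 (real N)) \<partial>M)"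
    unfolding f3 J3[symmetric] by (rule integral_divide_zero[symmetric])
  also have "\<dots> \<le> (\<integral>\<omega>. indicator A \<omega> * (bN * ((\<Sum>i<N. e2 i \<omega>) / ffac 2 (real N))) \<partial>M)"
  proof (rule integral_mono_AE)
    show "integrable M (\<lambda>\<omega>. indicator A \<omega> * ((\<Sum>i<N. e3 i \<omega>) / ffac 3 (real N)))"
      unfolding f3 using int3 by (rule integrable_divide_zero)
    show "integrable M (\<lambda>\<omega>. indicator A \<omega> * (bN * ((\<Sum>i<N. e2 i \<omega>) / ffac 2 (real N))))"
      unfolding f2 using integrable_divide_zero[OF int2] by (rule integrable_mult_right)
    show "AE \<omega> in M. indicator A \<omega> * ((\<Sum>i<N. e3 i \<omega>) / ffac 3 (real N))
        \<le> indicator A \<omega> * (bN * ((\<Sum>i<N. e2 i \<omega>) / ffac 2 (real N)))"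
      using mom
    proof eventually_elim
      case (elim \<omega>)
      then have "(\<Sum>i<N. e3 i \<omega>) / ffac 3 (real N) \<le> bN * ((\<Sum>i<N. e2 i \<omega>) / ffac 2 (real N))"
        unfolding e3_def e2_def using r by blast
      then show ?case by (intro mult_left_mono) auto
    qed
  qed
  also have "\<dots> = bN * ((\<Sum>i<N. (\<integral>\<omega>. indicator A \<omega> * e2 i \<omega> \<partial>M)) / ffac 2 (real N))"
    unfolding f2 J2[symmetric] by simp
  also have "\<dots> = bN * (\<integral>\<omega>. indicator A \<omega> * cN N \<nu> r \<omega> \<partial>M)"
    unfolding fc S2' I2[symmetric] by simp
  finally show ?thesis .
qed


definition S :: "nat \<Rightarrow> 'a \<Rightarrow> real" where
  "S k \<omega> = (\<Sum>r\<in>{1..k}. cN N \<nu> r \<omega>)"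

lemma S_meas: "S k \<in> borel_measurable M"
  unfolding S_def[abs_def] by (intro borel_measurable_sum cN_meas) auto

lemma cN_eq: "cN N \<nu> r \<omega> = Qs (\<lambda>i. \<nu> r i \<omega>) N / ffac 2 (real N)"
  unfolding cN_def Qs_def ..

lemma Dn_eq: "Dn r \<omega> = Ts (\<lambda>i. \<nu> r i \<omega>) N / ffac 3 (real N)"
  unfolding Dn_def Ts_def ..

lemma cN_bounds: "3 \<le> N \<Longrightarrow> 1 \<le> r \<Longrightarrow> \<omega> \<in> space M \<Longrightarrow> 0 \<le> cN N \<nu> r \<omega> \<and> cN N \<nu> r \<omega> \<le> 1"
  using c_facts(1,2)[of "\<lambda>i. \<nu> r i \<omega>" N] total[of r \<omega>] unfolding cN_eq by auto

lemma Dn_nonneg: "3 \<le> N \<Longrightarrow> 1 \<le> r \<Longrightarrow> \<omega> \<in> space M \<Longrightarrow> 0 \<le> Dn r \<omega>"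
  using c_facts(3)[of "\<lambda>i. \<nu> r i \<omega>" N] total[of r \<omega>] unfolding Dn_eq by auto

lemma S_mono: "3 \<le> N \<Longrightarrow> \<omega> \<in> space M \<Longrightarrow> j \<le> k \<Longrightarrow> S j \<omega> \<le> S k \<omega>"
  unfolding S_def using cN_bounds by (intro sum_mono2) auto

lemma S_Suc: "S (Suc k) \<omega> = S k \<omega> + cN N \<nu> (Suc k) \<omega>"
  unfolding S_def by (simp add: sum.cl_ivl_Suc)

lemma Aset_iff: "\<omega> \<in> Aset t r \<longleftrightarrow> \<omega> \<in> space M \<and> S (r - 1) \<omega> < t"
  unfolding Aset_def S_def by simp

lemma G_bound:
  assumes N3: "3 \<le> N" and t0: "0 \<le> t" and w: "\<omega> \<in> space M"
  shows "(\<Sum>r\<in>{1..K}. indicator (Aset t r) \<omega> * cN N \<nu> r \<omega>) \<le> t + 1"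
proof -
  have "(\<Sum>r\<in>{1..K}. indicator (Aset t r) \<omega> * cN N \<nu> r \<omega>) \<le> S K \<omega> \<and>
        (\<Sum>r\<in>{1..K}. indicator (Aset t r) \<omega> * cN N \<nu> r \<omega>) \<le> t + 1"
  proof (induction K)
    case 0 then show ?case using t0 by (simp add: S_def)
  next
    case (Suc K)
    let ?G = "(\<Sum>r\<in>{1..K}. indicator (Aset t r) \<omega> * cN N \<nu> r \<omega>)"
    have eq: "(\<Sum>r\<in>{1..Suc K}. indicator (Aset t r) \<omega> * cN N \<nu> r \<omega>)
        = ?G + indicator (Aset t (Suc K)) \<omega> * cN N \<nu> (Suc K) \<omega>"
      by (simp add: sum.cl_ivl_Suc)
    have cb: "0 \<le> cN N \<nu> (Suc K) \<omega>" "cN N \<nu> (Suc K) \<omega> \<le> 1" using cN_bounds[OF N3 _ w, of "Suc K"] by auto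
    have IH1: "?G \<le> S K \<omega>" and IH2: "?G \<le> t + 1" using Suc.IH by auto
    show ?case
    proof (cases "S K \<omega> < t")
      case True
      then have "\<omega> \<in> Aset t (Suc K)" using w by (simp add: Aset_iff)
      then have "indicator (Aset t (Suc K)) \<omega> = (1::real)" by simp
      then show ?thesis unfolding eq S_Suc using IH1 True cb by simp
    next
      case False
      then have "\<omega> \<notin> Aset t (Suc K)" by (simp add: Aset_iff)
      then have "indicator (Aset t (Suc K)) \<omega> = (0::real)" by simp
      then show ?thesis unfolding eq S_Suc using IH1 IH2 cb by simp
    qed
  qed
  then show ?thesis by blast
qed

lemma indD_int: "1 \<le> r \<Longrightarrow> integrable M (\<lambda>\<omega>. indicator (Aset t r) \<omega> * Dn r \<omega>)"
proof -
  assume r: "1 \<le> r"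
  have AM: "Aset t r \<in> sets M" by (rule Aset_M)
  have "integrable M (\<lambda>\<omega>. (\<Sum>i<N. indicator (Aset t r) \<omega> * ffac 3 (real (\<nu> r i \<omega>))) / ffac 3 (real N))"
    by (intro integrable_divide_zero Bochner_Integration.integrable_sum[where f="\<lambda>i \<omega>. indicator (Aset t r) \<omega> * ffac 3 (real (\<nu> r i \<omega>))"] g_int[OF r _ AM]) simp
  moreover have "(\<lambda>\<omega>. (\<Sum>i<N. indicator (Aset t r) \<omega> * ffac 3 (real (\<nu> r i \<omega>))) / ffac 3 (real N))
     = (\<lambda>\<omega>. indicator (Aset t r) \<omega> * Dn r \<omega>)"
    unfolding Dn_def by (rule ext) (simp only: sum_distrib_left[symmetric] times_divide_eq_right)
  ultimately show ?thesis by simp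
qed

lemma indc_int: "1 \<le> r \<Longrightarrow> integrable M (\<lambda>\<omega>. indicator (Aset t r) \<omega> * cN N \<nu> r \<omega>)"
proof -
  assume r: "1 \<le> r"
  have AM: "Aset t r \<in> sets M" by (rule Aset_M)
  have "integrable M (\<lambda>\<omega>. (\<Sum>i<N. indicator (Aset t r) \<omega> * ffac 2 (real (\<nu> r i \<omega>))) / ffac 2 (real N))"
    by (intro integrable_divide_zero Bochner_Integration.integrable_sum[where f="\<lambda>i \<omega>. indicator (Aset t r) \<omega> * ffac 2 (real (\<nu> r i \<omega>))"] g_int[OF r _ AM]) simp
  moreover have "(\<lambda>\<omega>. (\<Sum>i<N. indicator (Aset t r) \<omega> * ffac 2 (real (\<nu> r i \<omega>))) / ffac 2 (real N))
     = (\<lambda>\<omega>. indicator (Aset t r) \<omega> * cN N \<nu> r \<omega>)"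
    unfolding cN_def by (rule ext) (simp only: sum_distrib_left[symmetric] times_divide_eq_right)
  ultimately show ?thesis by simp
qed

lemma E_sum:
  fixes bN :: real
  assumes mom: "AE \<omega> in M. \<forall>s\<ge>1.
         (\<Sum>i<N. real_cond_exp M (filt M N \<nu> (s - 1)) (\<lambda>x. ffac 3 (real (\<nu> s i x))) \<omega>) / ffac 3 (real N)
         \<le> bN * ((\<Sum>i<N. real_cond_exp M (filt M N \<nu> (s - 1)) (\<lambda>x. ffac 2 (real (\<nu> s i x))) \<omega>) / ffac 2 (real N))"
    and N3: "3 \<le> N" and t0: "0 \<le> t"
  shows "(\<integral>\<omega>. (\<Sum>r\<in>{1..K}. indicator (Aset t r) \<omega> * Dn r \<omega>) \<partial>M) \<le> \<bar>bN\<bar> * (t + 1)"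
proof -
  have "(\<integral>\<omega>. (\<Sum>r\<in>{1..K}. indicator (Aset t r) \<omega> * Dn r \<omega>) \<partial>M)
      = (\<Sum>r\<in>{1..K}. (\<integral>\<omega>. indicator (Aset t r) \<omega> * Dn r \<omega> \<partial>M))"
    by (rule Bochner_Integration.integral_sum[where f="\<lambda>r \<omega>. indicator (Aset t r) \<omega> * Dn r \<omega>"]) (rule indD_int, simp)
  also have "\<dots> \<le> (\<Sum>r\<in>{1..K}. bN * (\<integral>\<omega>. indicator (Aset t r) \<omega> * cN N \<nu> r \<omega> \<partial>M))"
    by (intro sum_mono key_ineq[OF mom] Aset_filt) auto
  also have "\<dots> = bN * (\<integral>\<omega>. (\<Sum>r\<in>{1..K}. indicator (Aset t r) \<omega> * cN N \<nu> r \<omega>) \<partial>M)"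
    by (subst Bochner_Integration.integral_sum[where f="\<lambda>r \<omega>. indicator (Aset t r) \<omega> * cN N \<nu> r \<omega>"])
       (auto intro: indc_int simp: sum_distrib_left)
  also have "\<dots> \<le> \<bar>bN\<bar> * (t + 1)"
  proof -
    let ?I = "(\<integral>\<omega>. (\<Sum>r\<in>{1..K}. indicator (Aset t r) \<omega> * cN N \<nu> r \<omega>) \<partial>M)"
    have I0: "0 \<le> ?I"
      using cN_bounds[OF N3] by (intro integral_nonneg_AE AE_I2 sum_nonneg mult_nonneg_nonneg) auto
    have "?I \<le> (\<integral>\<omega>. t + 1 \<partial>M)"
    proof (rule integral_mono_AE)
      show "integrable M (\<lambda>\<omega>. \<Sum>r\<in>{1..K}. indicator (Aset t r) \<omega> * cN N \<nu> r \<omega>)"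
        by (rule Bochner_Integration.integrable_sum[where f="\<lambda>r \<omega>. indicator (Aset t r) \<omega> * cN N \<nu> r \<omega>"]) (rule indc_int, simp)
      show "AE \<omega> in M. (\<Sum>r\<in>{1..K}. indicator (Aset t r) \<omega> * cN N \<nu> r \<omega>) \<le> t + 1"
        using G_bound[OF N3 t0] by (intro AE_I2) auto
    qed simp
    also have "\<dots> = t + 1" by (simp add: prob_space)
    finally have "?I \<le> t + 1" .
    have "bN * ?I \<le> \<bar>bN\<bar> * ?I" using I0 by (intro mult_right_mono) auto
    also have "\<dots> \<le> \<bar>bN\<bar> * (t + 1)" using \<open>?I \<le> t + 1\<close> by (intro mult_left_mono) auto
    finally show ?thesis .
  qed
  finally show ?thesis .
qed


lemma tau_eq: "tauN N \<nu> t \<omega> = (LEAST s. t \<le> S s \<omega>)"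
  unfolding tauN_def S_def by simp

lemma tau_meas: "(\<lambda>\<omega>. tauN N \<nu> t \<omega>) \<in> M \<rightarrow>\<^sub>M count_space UNIV"
proof -
  have [measurable]: "S k \<in> borel_measurable M" for k by (rule S_meas)
  show ?thesis unfolding tau_eq by (rule measurable_Least) measurable
qed

lemma tau_props:
  assumes N3: "3 \<le> N" and t0: "0 < t" and w: "\<omega> \<in> space M" and ex: "\<exists>s. t \<le> S s \<omega>"
  shows "1 \<le> tauN N \<nu> t \<omega>" "t \<le> S (tauN N \<nu> t \<omega>) \<omega>" "S (tauN N \<nu> t \<omega> - 1) \<omega> < t"
    "\<And>r. 1 \<le> r \<Longrightarrow> \<omega> \<in> Aset t r \<longleftrightarrow> r \<le> tauN N \<nu> t \<omega>"
proof -
  let ?\<tau> = "tauN N \<nu> t \<omega>"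
  show ge: "t \<le> S ?\<tau> \<omega>" unfolding tau_eq using ex by (rule LeastI_ex)
  have lt: "\<not> t \<le> S k \<omega>" if "k < ?\<tau>" for k
    using that unfolding tau_eq by (rule not_less_Least)
  show t1: "1 \<le> ?\<tau>"
  proof (rule ccontr)
    assume "\<not> 1 \<le> ?\<tau>"
    then have "?\<tau> = 0" by simp
    then show False using ge t0 by (simp add: S_def)
  qed
  show "S (?\<tau> - 1) \<omega> < t" using lt[of "?\<tau> - 1"] t1 by simp
  fix r :: nat assume r: "1 \<le> r"
  show "\<omega> \<in> Aset t r \<longleftrightarrow> r \<le> ?\<tau>"
  proof
    assume "\<omega> \<in> Aset t r"
    then have "S (r - 1) \<omega> < t" by (simp add: Aset_iff)
    show "r \<le> ?\<tau>"
    proof (rule ccontr)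
      assume "\<not> r \<le> ?\<tau>"
      then have "S ?\<tau> \<omega> \<le> S (r - 1) \<omega>" using S_mono[OF N3 w] by simp
      then show False using ge \<open>S (r - 1) \<omega> < t\<close> by simp
    qed
  next
    assume "r \<le> ?\<tau>"
    then have "r - 1 < ?\<tau>" using r by simp
    then have "S (r - 1) \<omega> < t" using lt[of "r - 1"] by simp
    then show "\<omega> \<in> Aset t r" using w by (simp add: Aset_iff)
  qed
qed

lemma X_eq: "1 - pr n N \<nu> r \<omega> = W (\<lambda>i. \<nu> r i \<omega>) N n / ffac n (real N)"
  unfolding pr_def W_def Inj_def P_def by simp

lemma X_meas: "1 \<le> r \<Longrightarrow> (\<lambda>\<omega>. 1 - pr n N \<nu> r \<omega>) \<in> borel_measurable M"
  unfolding pr_def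
  by (intro borel_measurable_diff borel_measurable_const borel_measurable_divide borel_measurable_sum
        borel_measurable_prod rv_M[where f=real]) (auto simp: PiE_iff)

lemma F_meas: "(\<lambda>\<omega>. \<Prod>r\<in>{1..tauN N \<nu> t \<omega>}. (1 - pr n N \<nu> r \<omega>)) \<in> borel_measurable M"
proof -
  have "(\<lambda>\<omega>. (\<lambda>k \<omega>. \<Prod>r\<in>{1..k}. (1 - pr n N \<nu> r \<omega>)) (tauN N \<nu> t \<omega>) \<omega>) \<in> borel_measurable M"
    by (rule measurable_compose_countable[OF _ tau_meas]) (intro borel_measurable_prod X_meas, auto)
  then show ?thesis by simp
qed


lemma step_bound:
  assumes N3: "3 \<le> N" and nN: "n < N" and r: "1 \<le> r" and w: "\<omega> \<in> space M"
  defines "a \<equiv> real n * (real n - 1) / 2"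
  shows "0 \<le> 1 - pr n N \<nu> r \<omega>" "1 - pr n N \<nu> r \<omega> \<le> 1"
    "\<bar>(1 - pr n N \<nu> r \<omega>) - exp (- (a * cN N \<nu> r \<omega>))\<bar> \<le>
     (a * (rho N n - 1) + a / real N + 2 * a * real n ^ 2 * rho N n / real N + (a^2 * rho N n + a^2) / (real N - 1)) * cN N \<nu> r \<omega>
     + (a^2 * rho N n + a * real n ^ 2 * rho N n + a^2) * Dn r \<omega>"
    "(cN N \<nu> r \<omega>)^2 \<le> Dn r \<omega> + cN N \<nu> r \<omega> / (real N - 1)"
proof -
  let ?v = "\<lambda>i. \<nu> r i \<omega>"
  have tot: "(\<Sum>i<N. ?v i) = N" using total[OF r w] .
  note cf = comb_final[OF tot nN N3]
  note cc = c_facts[OF tot N3]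
  show "0 \<le> 1 - pr n N \<nu> r \<omega>" "1 - pr n N \<nu> r \<omega> \<le> 1" unfolding X_eq using cf(1,2) by auto
  show "(cN N \<nu> r \<omega>)^2 \<le> Dn r \<omega> + cN N \<nu> r \<omega> / (real N - 1)"
    unfolding cN_eq Dn_eq using cc(4) .
  have a0: "0 \<le> a" unfolding a_def by (simp add: gauss_real[symmetric] sum_nonneg)
  show "\<bar>(1 - pr n N \<nu> r \<omega>) - exp (- (a * cN N \<nu> r \<omega>))\<bar> \<le>
     (a * (rho N n - 1) + a / real N + 2 * a * real n ^ 2 * rho N n / real N + (a^2 * rho N n + a^2) / (real N - 1)) * cN N \<nu> r \<omega>
     + (a^2 * rho N n + a * real n ^ 2 * rho N n + a^2) * Dn r \<omega>"
    unfolding X_eq cN_eq Dn_eq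
    by (rule step_err[OF a0 rho_ge1[OF tot nN N3] _ _ cf(1) cf(2) cc(1) cc(2) cc(3) cc(4)])
       (use N3 cf(3) cf(4) in \<open>auto simp: a_def\<close>)
qed


lemma fixed_bound:
  fixes bN t \<eta> :: real
  assumes N3: "3 \<le> N" and nN: "n < N"
    and mom: "AE \<omega> in M. \<forall>s\<ge>1.
         (\<Sum>i<N. real_cond_exp M (filt M N \<nu> (s - 1)) (\<lambda>x. ffac 3 (real (\<nu> s i x))) \<omega>) / ffac 3 (real N)
         \<le> bN * ((\<Sum>i<N. real_cond_exp M (filt M N \<nu> (s - 1)) (\<lambda>x. ffac 2 (real (\<nu> s i x))) \<omega>) / ffac 2 (real N))"
    and tfin0: "AE \<omega> in M. \<exists>s. (\<Sum>r\<in>{1..s}. cN N \<nu> r \<omega>) \<ge> t"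
    and t0: "0 < t" and eta: "0 < \<eta>"
  defines "a \<equiv> real n * (real n - 1) / 2"
  shows "\<bar>(\<integral>\<omega>. (\<Prod>r\<in>{1..tauN N \<nu> t \<omega>}. (1 - pr n N \<nu> r \<omega>)) \<partial>M) - exp (- (a * t))\<bar>
    \<le> (a * (rho N n - 1) + a / real N + 2 * a * real n ^ 2 * rho N n / real N + (a^2 * rho N n + a^2) / (real N - 1)) * (t + 1)
      + a * \<eta> + a * ((1 / (real N - 1)) / \<eta>)
      + ((a^2 * rho N n + a * real n ^ 2 * rho N n + a^2) + a / \<eta>) * (\<bar>bN\<bar> * (t + 1))"
proof -
  have tfin: "AE \<omega> in M. \<exists>s. t \<le> S s \<omega>" using tfin0 unfolding S_def by simp
  define E1 where "E1 = a * (rho N n - 1) + a / real N + 2 * a * real n ^ 2 * rho N n / real N + (a^2 * rho N n + a^2) / (real N - 1)"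
  define K where "K = a^2 * rho N n + a * real n ^ 2 * rho N n + a^2"
  define F where "F \<omega> = (\<Prod>r\<in>{1..tauN N \<nu> t \<omega>}. (1 - pr n N \<nu> r \<omega>))" for \<omega>
  define L where "L = exp (- (a * t))"
  define \<alpha> where "\<alpha> = E1 * (t + 1) + a * \<eta> + a * ((1 / (real N - 1)) / \<eta>)"
  define \<beta> where "\<beta> = K + a / \<eta>"
  define \<sigma> where "\<sigma> K0 \<omega> = (\<Sum>r\<in>{1..K0}. indicator (Aset t r) \<omega> * Dn r \<omega>)" for K0 \<omega>
  define B where "B K0 = {\<omega> \<in> space M. K0 < tauN N \<nu> t \<omega>}" for K0
  have a0: "0 \<le> a" unfolding a_def by (simp add: gauss_real[symmetric] sum_nonneg)
  have rho1: "1 \<le> rho N n" by (rule rho_ge1'[OF nN])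
  have N1: "0 < real N - 1" using N3 by simp
  have E0: "0 \<le> E1" unfolding E1_def using a0 rho1 N1 N3 by (intro add_nonneg_nonneg) auto
  have K0: "0 \<le> K" unfolding K_def using a0 rho1 by simp
  have al0: "0 \<le> \<alpha>" unfolding \<alpha>_def using E0 a0 eta N1 t0 by simp
  have be0: "0 \<le> \<beta>" unfolding \<beta>_def using K0 a0 eta by simp
  have Fb: "0 \<le> F \<omega> \<and> F \<omega> \<le> 1" if w: "\<omega> \<in> space M" for \<omega>
    unfolding F_def using step_bound(1,2)[OF N3 nN _ w] by (auto intro!: prod_nonneg prod_le_1)
  have Lb: "0 \<le> L" "L \<le> 1" unfolding L_def using a0 t0 by auto
  have Fm: "F \<in> borel_measurable M" unfolding F_def[abs_def] by (rule F_meas)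
  have Fi: "integrable M F" using Fm Fb by (intro bounded_int[where B=1]) auto
  have Bs: "B K0 \<in> sets M" for K0
  proof -
    have "B K0 = (\<lambda>\<omega>. tauN N \<nu> t \<omega>) -` {k. K0 < k} \<inter> space M" unfolding B_def by auto
    then show ?thesis using measurable_sets[OF tau_meas, of "{k. K0 < k}"] by simp
  qed
  have \<sigma>i: "integrable M (\<sigma> K0)" for K0
    unfolding \<sigma>_def[abs_def]
    by (rule Bochner_Integration.integrable_sum[where f="\<lambda>r \<omega>. indicator (Aset t r) \<omega> * Dn r \<omega>"]) (rule indD_int, simp)
  have \<sigma>0: "0 \<le> \<sigma> K0 \<omega>" if "\<omega> \<in> space M" for K0 \<omega>
    unfolding \<sigma>_def using Dn_nonneg[OF N3 _ that] by (intro sum_nonneg mult_nonneg_nonneg) auto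
  have PK: "AE \<omega> in M. \<bar>F \<omega> - L\<bar> \<le> \<alpha> + \<beta> * \<sigma> K0 \<omega> + indicator (B K0) \<omega>" for K0
    using tfin AE_space
  proof (eventually_elim)
    case (elim \<omega>)
    show ?case
    proof -
      have w: "\<omega> \<in> space M" using elim(2) .
      let ?\<tau> = "tauN N \<nu> t \<omega>"
      note tp = tau_props[OF N3 t0 w elim(1)]
      show ?thesis
      proof (cases "?\<tau> \<le> K0")
        case False
        then have "indicator (B K0) \<omega> = (1::real)" unfolding B_def using w by simp
        moreover have "\<bar>F \<omega> - L\<bar> \<le> 1" using Fb[OF w] Lb by (simp add: abs_le_iff)
        moreover have "0 \<le> \<beta> * \<sigma> K0 \<omega>" using be0 \<sigma>0[OF w] by simp
        ultimately show ?thesis using al0 by linarith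
      next
        case True
        define SD where "SD = (\<Sum>r\<in>{1..?\<tau>}. Dn r \<omega>)"
        have "\<sigma> K0 \<omega> = (\<Sum>r\<in>{1..K0}. if r \<le> ?\<tau> then Dn r \<omega> else 0)"
          unfolding \<sigma>_def using tp(4) by (intro sum.cong) auto
        also have "\<dots> = (\<Sum>r\<in>{r\<in>{1..K0}. r \<le> ?\<tau>}. Dn r \<omega>)"
          by (rule sum.inter_filter[symmetric]) simp
        also have "{r\<in>{1..K0}. r \<le> ?\<tau>} = {1..?\<tau>}" using True by auto
        finally have sig: "\<sigma> K0 \<omega> = SD" unfolding SD_def .
        have "\<bar>F \<omega> - L\<bar> \<le> E1 * (t + 1) + K * SD + a * \<eta> + a * ((SD + 1 / (real N - 1)) / \<eta>)"
          unfolding F_def L_def SD_def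
        proof (rule path_bound[where c="\<lambda>r. cN N \<nu> r \<omega>" and D="\<lambda>r. Dn r \<omega>" and x="real N"])
          show "\<And>r. 1 \<le> r \<Longrightarrow> 0 \<le> 1 - pr n N \<nu> r \<omega> \<and> 1 - pr n N \<nu> r \<omega> \<le> 1"
            using step_bound(1,2)[OF N3 nN _ w] by auto
          show "\<And>r. 1 \<le> r \<Longrightarrow> 0 \<le> cN N \<nu> r \<omega> \<and> cN N \<nu> r \<omega> \<le> 1"
            using cN_bounds[OF N3 _ w] by auto
          show "\<And>r. 1 \<le> r \<Longrightarrow> 0 \<le> Dn r \<omega>" using Dn_nonneg[OF N3 _ w] by auto
          show "\<And>r. 1 \<le> r \<Longrightarrow> (cN N \<nu> r \<omega>)^2 \<le> Dn r \<omega> + cN N \<nu> r \<omega> / (real N - 1)"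
            using step_bound(4)[OF N3 nN _ w] by auto
          show "\<And>r. 1 \<le> r \<Longrightarrow> \<bar>(1 - pr n N \<nu> r \<omega>) - exp (- (a * cN N \<nu> r \<omega>))\<bar> \<le> E1 * cN N \<nu> r \<omega> + K * Dn r \<omega>"
            using step_bound(3)[OF N3 nN _ w] unfolding E1_def K_def a_def by auto
          show "t \<le> (\<Sum>r\<in>{1..?\<tau>}. cN N \<nu> r \<omega>)" using tp(2) unfolding S_def .
          show "(\<Sum>r\<in>{1..?\<tau> - 1}. cN N \<nu> r \<omega>) < t" using tp(3) unfolding S_def .
        qed (use a0 t0 eta N3 E0 K0 tp(1) in auto)
        also have "\<dots> = \<alpha> + \<beta> * SD"
          unfolding \<alpha>_def \<beta>_def by (simp add: add_divide_distrib distrib_left distrib_right)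
        finally have "\<bar>F \<omega> - L\<bar> \<le> \<alpha> + \<beta> * \<sigma> K0 \<omega>" using sig by simp
        moreover have "0 \<le> (indicator (B K0) \<omega> :: real)" by simp
        ultimately show ?thesis by linarith
      qed
    qed
  qed
  have bound: "\<bar>(\<integral>\<omega>. F \<omega> \<partial>M) - L\<bar> \<le> \<alpha> + \<beta> * (\<bar>bN\<bar> * (t + 1)) + measure M (B K0)" for K0
  proof -
    have "\<bar>(\<integral>\<omega>. F \<omega> \<partial>M) - L\<bar> = \<bar>(\<integral>\<omega>. F \<omega> - L \<partial>M)\<bar>"
      using Fi by (simp add: prob_space)
    also have "\<dots> \<le> (\<integral>\<omega>. \<bar>F \<omega> - L\<bar> \<partial>M)"
      using integral_norm_bound[of M "\<lambda>\<omega>. F \<omega> - L"] by simp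
    also have "\<dots> \<le> (\<integral>\<omega>. \<alpha> + \<beta> * \<sigma> K0 \<omega> + indicator (B K0) \<omega> \<partial>M)"
    proof (rule integral_mono_AE[OF _ _ PK])
      show "integrable M (\<lambda>\<omega>. \<bar>F \<omega> - L\<bar>)" using Fi by auto
      show "integrable M (\<lambda>\<omega>. \<alpha> + \<beta> * \<sigma> K0 \<omega> + indicator (B K0) \<omega>)"
        using \<sigma>i Bs by (auto intro!: Bochner_Integration.integrable_add integrable_mult_right integrable_real_indicator simp: less_top[symmetric])
    qed
    also have "\<dots> = \<alpha> + \<beta> * (\<integral>\<omega>. \<sigma> K0 \<omega> \<partial>M) + measure M (B K0)"
      using \<sigma>i Bs by (simp add: prob_space Bochner_Integration.integral_add integrable_real_indicator less_top[symmetric])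
    also have "\<dots> \<le> \<alpha> + \<beta> * (\<bar>bN\<bar> * (t + 1)) + measure M (B K0)"
      using E_sum[OF mom N3, of t K0] t0 be0 unfolding \<sigma>_def by (simp add: mult_left_mono)
    finally show ?thesis .
  qed
  have lim: "(\<lambda>K0. measure M (B K0)) \<longlonglongrightarrow> 0"
  proof -
    have "(\<lambda>K0. measure M (B K0)) \<longlonglongrightarrow> measure M (\<Inter> (range B))"
      by (rule finite_Lim_measure_decseq) (use Bs in \<open>auto simp: monotone_on_def B_def\<close>)
    moreover have "\<Inter> (range B) = {}" unfolding B_def by auto
    ultimately show ?thesis by simp
  qed
  have "\<bar>(\<integral>\<omega>. F \<omega> \<partial>M) - L\<bar> \<le> \<alpha> + \<beta> * (\<bar>bN\<bar> * (t + 1))"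
  proof (rule LIMSEQ_le_const)
    show "(\<lambda>K0. \<alpha> + \<beta> * (\<bar>bN\<bar> * (t + 1)) + measure M (B K0)) \<longlonglongrightarrow> \<alpha> + \<beta> * (\<bar>bN\<bar> * (t + 1))"
      using tendsto_add[OF tendsto_const lim] by simp
    show "\<exists>N. \<forall>n\<ge>N. \<bar>(\<integral>\<omega>. F \<omega> \<partial>M) - L\<bar> \<le> \<alpha> + \<beta> * (\<bar>bN\<bar> * (t + 1)) + measure M (B n)"
      using bound by blast
  qed
  then show ?thesis unfolding F_def L_def \<alpha>_def \<beta>_def E1_def K_def by (simp add: algebra_simps)
qed

end



lemma rho_lim: "(\<lambda>N. rho N n) \<longlonglongrightarrow> 1"
proof -
  have u: "(\<lambda>N. inverse (real N)) \<longlonglongrightarrow> 0"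
    by (rule tendsto_inverse_0_at_top[OF filterlim_real_sequentially])
  have q: "(\<lambda>N. inverse (1 - real n * inverse (real N))) \<longlonglongrightarrow> 1"
    using tendsto_inverse[OF tendsto_diff[OF tendsto_const tendsto_mult[OF tendsto_const u]], of 1 "real n"]
    by simp
  have ev: "\<forall>\<^sub>F N in sequentially. inverse (1 - real n * inverse (real N)) = real N / (real N - real n)"
  proof (rule eventually_sequentiallyI[of "Suc n"])
    fix N assume "Suc n \<le> N"
    then have h: "real N \<noteq> 0" "real N - real n \<noteq> 0" by auto
    then show "inverse (1 - real n * inverse (real N)) = real N / (real N - real n)"
      by (simp add: field_simps)
  qed
  have "(\<lambda>N. real N / (real N - real n)) \<longlonglongrightarrow> 1" using Lim_transform_eventually[OF q ev] .
  then have "(\<lambda>N. (real N / (real N - real n)) ^ n) \<longlonglongrightarrow> 1 ^ n" by (rule tendsto_power)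
  then show ?thesis unfolding rho_def by simp
qed

lemma w_lim: "(\<lambda>N. inverse (real N - 1)) \<longlonglongrightarrow> 0"
proof -
  have "filterlim (\<lambda>N. -1 + real N) at_top sequentially"
    by (rule filterlim_tendsto_add_at_top[OF tendsto_const filterlim_real_sequentially])
  then show ?thesis using tendsto_inverse_0_at_top by fastforce
qed

theorem lemma7:
  fixes n :: nat
    and M :: "nat \<Rightarrow> 'a measure"
    and \<nu> :: "nat \<Rightarrow> nat \<Rightarrow> nat \<Rightarrow> 'a \<Rightarrow> nat"
    and b :: "nat \<Rightarrow> real"
    and t :: real
  assumes prob: "\<And>N. N \<ge> n \<Longrightarrow> prob_space (M N)"
    and meas: "\<And>N s i. N \<ge> n \<Longrightarrow> 1 \<le> s \<Longrightarrow> i < N \<Longrightarrow>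
                 \<nu> N s i \<in> measurable (M N) (count_space UNIV)"
    and total: "\<And>N s \<omega>. N \<ge> n \<Longrightarrow> 1 \<le> s \<Longrightarrow> \<omega> \<in> space (M N) \<Longrightarrow>
                 (\<Sum>i<N. \<nu> N s i \<omega>) = N"
    and tau_fin: "\<forall>\<^sub>F N in sequentially. \<forall>u\<ge>0. AE \<omega> in M N.
                 \<exists>s. (\<Sum>r\<in>{1..s}. cN N (\<nu> N) r \<omega>) \<ge> u"
    and b_lim: "b \<longlonglongrightarrow> 0"
    and moment: "\<forall>\<^sub>F N in sequentially. AE \<omega> in M N. \<forall>s\<ge>1.
         (\<Sum>i<N. real_cond_exp (M N) (filt (M N) N (\<nu> N) (s - 1))
                    (\<lambda>x. ffac 3 (real (\<nu> N s i x))) \<omega>) / ffac 3 (real N)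
         \<le> b N * ((\<Sum>i<N. real_cond_exp (M N) (filt (M N) N (\<nu> N) (s - 1))
                    (\<lambda>x. ffac 2 (real (\<nu> N s i x))) \<omega>) / ffac 2 (real N))"
    and t_pos: "0 < t"
  shows "(\<lambda>N. integral\<^sup>L (M N)
            (\<lambda>\<omega>. \<Prod>r\<in>{1..tauN N (\<nu> N) t \<omega>}. (1 - pr n N (\<nu> N) r \<omega>)))
         \<longlonglongrightarrow> exp (- (real n * (real n - 1) / 2) * t)"
proof -
  define a where "a = real n * (real n - 1) / 2"
  have a0: "0 \<le> a" unfolding a_def by (simp add: gauss_real[symmetric] sum_nonneg)
  define I where "I N = integral\<^sup>L (M N) (\<lambda>\<omega>. \<Prod>r\<in>{1..tauN N (\<nu> N) t \<omega>}. (1 - pr n N (\<nu> N) r \<omega>))" for N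
  define L where "L = exp (- (a * t))"
  define bd where "bd \<eta> N = (a * (rho N n - 1) + a / real N + 2 * a * real n ^ 2 * rho N n / real N + (a^2 * rho N n + a^2) / (real N - 1)) * (t + 1)
      + a * \<eta> + a * ((1 / (real N - 1)) / \<eta>)
      + ((a^2 * rho N n + a * real n ^ 2 * rho N n + a^2) + a / \<eta>) * (\<bar>b N\<bar> * (t + 1))" for \<eta> N
  have FN: "fixedN (M N) N (\<nu> N)" if "n \<le> N" for N
    using that prob meas total by (intro fixedN.intro fixedN_axioms.intro) auto
  have ev_bound: "\<forall>\<^sub>F N in sequentially. \<bar>I N - L\<bar> \<le> bd \<eta> N" if eta: "0 < \<eta>" for \<eta>
  proof -
    have "\<forall>\<^sub>F N in sequentially. Suc n \<le> N \<and> 3 \<le> N" by (rule eventually_sequentiallyI[of "Suc n + 3"]) auto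
    with tau_fin moment show ?thesis
    proof eventually_elim
      case (elim N)
      have tf: "AE \<omega> in M N. \<exists>s. (\<Sum>r\<in>{1..s}. cN N (\<nu> N) r \<omega>) \<ge> t" using elim(1) t_pos by auto
      show ?case
        using fixedN.fixed_bound[OF FN[of N] _ _ elim(2) tf t_pos eta] elim(3)
        unfolding I_def L_def bd_def a_def by auto
    qed
  qed
  have bd_lim: "(\<lambda>N. bd \<eta> N) \<longlonglongrightarrow> a * \<eta>" if eta0: "0 < \<eta>" for \<eta>
  proof -
    define u where "u N = inverse (real N)" for N
    define w where "w N = inverse (real N - 1)" for N
    have u: "u \<longlonglongrightarrow> 0" unfolding u_def by (rule tendsto_inverse_0_at_top[OF filterlim_real_sequentially])
    have w: "w \<longlonglongrightarrow> 0" unfolding w_def by (rule w_lim)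
    have r: "(\<lambda>N. rho N n) \<longlonglongrightarrow> 1" by (rule rho_lim)
    have bb: "(\<lambda>N. \<bar>b N\<bar>) \<longlonglongrightarrow> 0" using tendsto_rabs[OF b_lim] by simp
    have eq: "bd \<eta> N = (a * (rho N n - 1) + a * u N + 2 * a * real n ^ 2 * rho N n * u N + (a^2 * rho N n + a^2) * w N) * (t + 1)
      + a * \<eta> + a * (w N / \<eta>)
      + ((a^2 * rho N n + a * real n ^ 2 * rho N n + a^2) + a / \<eta>) * (\<bar>b N\<bar> * (t + 1))" for N
      unfolding bd_def u_def w_def by (simp add: divide_inverse)
    have "(\<lambda>N. (a * (rho N n - 1) + a * u N + 2 * a * real n ^ 2 * rho N n * u N + (a^2 * rho N n + a^2) * w N) * (t + 1)
      + a * \<eta> + a * (w N / \<eta>)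
      + ((a^2 * rho N n + a * real n ^ 2 * rho N n + a^2) + a / \<eta>) * (\<bar>b N\<bar> * (t + 1)))
      \<longlonglongrightarrow> (a * (1 - 1) + a * 0 + 2 * a * real n ^ 2 * 1 * 0 + (a^2 * 1 + a^2) * 0) * (t + 1)
      + a * \<eta> + a * (0 / \<eta>)
      + ((a^2 * 1 + a * real n ^ 2 * 1 + a^2) + a / \<eta>) * (0 * (t + 1))"
      using eta0 by (intro tendsto_intros u w r bb) auto
    then show ?thesis unfolding eq by simp
  qed
  have "(\<lambda>N. I N) \<longlonglongrightarrow> L"
  proof (rule tendstoI)
    fix \<epsilon> :: real assume e: "0 < \<epsilon>"
    define \<eta> where "\<eta> = \<epsilon> / (2 * (a + 1))"
    have eta: "0 < \<eta>" unfolding \<eta>_def using e a0 by simp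
    have "a * \<eta> < \<epsilon>"
    proof -
      have "a * \<eta> \<le> (a + 1) * \<eta>" using eta by simp
      also have "\<dots> = \<epsilon> / 2"
      proof -
        have h: "a + 1 \<noteq> 0" "2 * a + 2 \<noteq> 0" using a0 by auto
        show ?thesis unfolding \<eta>_def using h by (simp add: field_simps)
      qed
      finally show ?thesis using e by simp
    qed
    then have "\<forall>\<^sub>F N in sequentially. bd \<eta> N < \<epsilon>" using order_tendstoD(2)[OF bd_lim[OF eta]] by blast
    with ev_bound[OF eta] show "\<forall>\<^sub>F N in sequentially. dist (I N) L < \<epsilon>"
      by eventually_elim (simp add: dist_real_def)
  qed
  moreover have "exp (- (real n * (real n - 1) / 2) * t) = L" unfolding L_def a_def by simp
  ultimately show ?thesis unfolding I_def by simp
qed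

end
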